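(* Let $X_1,\dots,X_n$ be i.i.d. from a distribution $p_\theta$ in a natural univariate exponential family $\{p_\theta:\theta\in\Theta\}$, with mean parameter $\mu=B'(\theta)$, and let $\hat\mu(n)=\frac1n\sum_{i=1}^nX_i$. Then $$\mathbb{E}_{p_\theta}\big[n\,D_{\psi_\mu^*}(\hat\mu(n),\mu)\big]\le2\quad\text{for all }\theta\in\Theta.$$ Moreover, if $(\mu_1,\mu_0)\mapsto\sqrt{D_{\psi_{\mu_0}^*}(\mu_1,\mu_0)}$ satisfies the local triangle inequality condition with constants $M\in(0,1]$ and $\epsilon_0>0$, then for all sufficiently large $n$, $$\inf_{\hat\mu}\sup_{\theta\in\Theta}\mathbb{E}_{p_\theta}\big[n\,D_{\psi_\mu^*}(\hat\mu,\mu)\big]\ge\frac{M\log2}{16},$$ where the infimum is over all estimators based on $X_1,\dots,X_n$.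
   Context: Natural exponential family: densities $p_\theta(x)=\exp\{\theta x-B(\theta)\}$ w.r.t. a reference measure $\gamma$ on $\mathbb{R}$, with $\Theta$ a nonempty open subset of $\{\theta:\int e^{\theta x}\gamma(dx)<\infty\}$ and $B(\theta)=\log\int e^{\theta x}\gamma(dx)$ strictly convex. Mean parameter space $\mathcal{M}=\{B'(\theta):\theta\in\Theta\}$ (in bijection with $\Theta$). For $\theta\in\Theta$ with mean $\mu=B'(\theta)$, let $\Lambda_\theta=\{\lambda:\lambda+\theta\in\Theta\}$, $\psi(\lambda;\theta)=B(\lambda+\theta)-B(\theta)-\lambda B'(\theta)$, $\psi_\mu(\lambda)=\lambda\mu+\psi(\lambda;\theta)$, and $\psi_\mu^*(z)=\sup_{\lambda\in\Lambda_\theta}\{\lambda z-\psi_\mu(\lambda)\}$ its convex conjugate. Bregman divergence: $D_{\psi_\mu^*}(\hat\mu,\mu)=\psi_\mu^*(\hat\mu)-\psi_\mu^*(\mu)-\psi_\mu^{*\prime}(\mu)(\hat\mu-\mu)$. A function $d:\mathcal{M}\times\mathcal{M}\to[0,\infty)$ satisfies the local triangle inequality condition if there exist constants $0<M\le1$ and $\epsilon_0>0$ such that for all $\mu_0,\mu_1,\mu_2\in\mathcal{M}$ with $\max\{d(\mu_1,\mu_0),d(\mu_2,\mu_0)\}\le\epsilon_0$ one has $d(\mu_1,\mu_0)+d(\mu_2,\mu_0)\ge M\max\{d(\mu_1,\mu_2),d(\mu_2,\mu_1)\}$. *)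

theory Defs
  imports "HOL-Probability.Probability"
begin

definition strictly_convex_on :: "real set \<Rightarrow> (real \<Rightarrow> real) \<Rightarrow> bool" where
  "strictly_convex_on S f \<longleftrightarrow> convex S \<and>
     (\<forall>x\<in>S. \<forall>y\<in>S. \<forall>t. x \<noteq> y \<longrightarrow> 0 < t \<longrightarrow> t < 1 \<longrightarrow>
        f ((1 - t) * x + t * y) < (1 - t) * f x + t * f y)"

definition natparam :: "real measure \<Rightarrow> real set" where
  "natparam \<gamma> = {\<theta>. (\<integral>\<^sup>+ x. ennreal (exp (\<theta> * x)) \<partial>\<gamma>) < \<infinity>}"

definition logpart :: "real measure \<Rightarrow> real \<Rightarrow> real" where
  "logpart \<gamma> \<theta> = ln (\<integral> x. exp (\<theta> * x) \<partial>\<gamma>)"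

definition expfam :: "real measure \<Rightarrow> real \<Rightarrow> real measure" where
  "expfam \<gamma> \<theta> = density \<gamma> (\<lambda>x. ennreal (exp (\<theta> * x - logpart \<gamma> \<theta>)))"

definition meanp :: "real measure \<Rightarrow> real \<Rightarrow> real" where
  "meanp \<gamma> \<theta> = deriv (logpart \<gamma>) \<theta>"

definition psi :: "real measure \<Rightarrow> real \<Rightarrow> real \<Rightarrow> real" where
  "psi \<gamma> \<theta> l = logpart \<gamma> (l + \<theta>) - logpart \<gamma> \<theta> - l * meanp \<gamma> \<theta>"

definition psi_mu :: "real measure \<Rightarrow> real \<Rightarrow> real \<Rightarrow> real" where
  "psi_mu \<gamma> \<theta> l = l * meanp \<gamma> \<theta> + psi \<gamma> \<theta> l"

definition psi_star :: "real measure \<Rightarrow> real set \<Rightarrow> real \<Rightarrow> real \<Rightarrow> ereal" where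
  "psi_star \<gamma> \<Theta> \<theta> z = (SUP l \<in> {l. l + \<theta> \<in> \<Theta>}. ereal (l * z - psi_mu \<gamma> \<theta> l))"

definition bregman :: "real measure \<Rightarrow> real set \<Rightarrow> real \<Rightarrow> real \<Rightarrow> ereal" where
  "bregman \<gamma> \<Theta> \<theta> z =
     psi_star \<gamma> \<Theta> \<theta> z - psi_star \<gamma> \<Theta> \<theta> (meanp \<gamma> \<theta>)
     - ereal (deriv (\<lambda>w. real_of_ereal (psi_star \<gamma> \<Theta> \<theta> w)) (meanp \<gamma> \<theta>) * (z - meanp \<gamma> \<theta>))"

definition local_triangle :: "real set \<Rightarrow> (real \<Rightarrow> real \<Rightarrow> real) \<Rightarrow> real \<Rightarrow> real \<Rightarrow> bool" where
  "local_triangle Ms d M \<epsilon>0 \<longleftrightarrow> 0 < M \<and> M \<le> 1 \<and> 0 < \<epsilon>0 \<and>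
     (\<forall>\<mu>0\<in>Ms. \<forall>\<mu>1\<in>Ms. \<forall>\<mu>2\<in>Ms. max (d \<mu>1 \<mu>0) (d \<mu>2 \<mu>0) \<le> \<epsilon>0 \<longrightarrow>
        d \<mu>1 \<mu>0 + d \<mu>2 \<mu>0 \<ge> M * max (d \<mu>1 \<mu>2) (d \<mu>2 \<mu>1))"

text \<open>The root-Bregman function (mu1, mu0) |-> sqrt(D_{psi_{mu0}^*}(mu1, mu0)) on the mean space;
  mu0 is mapped back to its natural parameter.\<close>
definition sqrt_breg :: "real measure \<Rightarrow> real set \<Rightarrow> real \<Rightarrow> real \<Rightarrow> real" where
  "sqrt_breg \<gamma> \<Theta> \<mu>1 \<mu>0 =
     sqrt (real_of_ereal (bregman \<gamma> \<Theta> (THE \<theta>. \<theta> \<in> \<Theta> \<and> meanp \<gamma> \<theta> = \<mu>0) \<mu>1))"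

definition risk :: "real measure \<Rightarrow> real set \<Rightarrow> nat \<Rightarrow> ((nat \<Rightarrow> real) \<Rightarrow> real) \<Rightarrow> real \<Rightarrow> ennreal" where
  "risk \<gamma> \<Theta> n est \<theta> =
     (\<integral>\<^sup>+ X. e2ennreal (ereal (real n) * bregman \<gamma> \<Theta> \<theta> (est X))
        \<partial>(\<Pi>\<^sub>M i\<in>{..<n}. expfam \<gamma> \<theta>))"

end

theory Submission
  imports Defs
begin


lemma upset_borel:
  fixes U :: "real set"
  assumes up: "\<And>x y. x \<in> U \<Longrightarrow> x \<le> y \<Longrightarrow> y \<in> U"
  shows "U \<in> sets borel"
proof (cases "U = {}")
  case False
  show ?thesis
  proof (cases "bdd_below U")
    case bdd: True
    define a where "a = Inf U"
    have lo: "\<And>x. x \<in> U \<Longrightarrow> a \<le> x" unfolding a_def using bdd by (simp add: cInf_lower)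
    have hi: "\<And>y. a < y \<Longrightarrow> y \<in> U"
    proof -
      fix y assume "a < y"
      then obtain x where "x \<in> U" "x < y" using cInf_less_iff[OF False bdd] unfolding a_def by blast
      thus "y \<in> U" using up by auto
    qed
    show ?thesis
    proof (cases "a \<in> U")
      case True
      hence "U = {a..}" using lo up by auto
      thus ?thesis by simp
    next
      case nin: False
      hence "U = {a<..}" using lo hi by (force simp: less_le)
      thus ?thesis by simp
    qed
  next
    case nb: False
    have "\<forall>y. y \<in> U"
    proof
      fix y
      obtain x where "x \<in> U" "x \<le> y" using nb unfolding bdd_below_def by (meson linorder_not_le less_imp_le)
      thus "y \<in> U" using up by blast
    qed
    hence "U = UNIV" by auto
    thus ?thesis by simp
  qed
qed simp

lemma coinitial_seq:
  fixes U :: "real set"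
  assumes up: "\<And>x y. x \<in> U \<Longrightarrow> x \<le> y \<Longrightarrow> y \<in> U" and ne: "U \<noteq> {}"
  shows "\<exists>f::nat \<Rightarrow> real. range f \<subseteq> U \<and> (\<forall>y\<in>U. \<exists>k. f k \<le> y)"
proof (cases "bdd_below U")
  case bdd: True
  define a where "a = Inf U"
  have lo: "\<And>x. x \<in> U \<Longrightarrow> a \<le> x" unfolding a_def using bdd by (simp add: cInf_lower)
  show ?thesis
  proof (cases "a \<in> U")
    case True
    thus ?thesis using lo by (intro exI[of _ "\<lambda>_. a"]) auto
  next
    case nin: False
    have "\<forall>k::nat. \<exists>y\<in>U. y < a + 1 / (real k + 1)"
    proof
      fix k :: nat
      have "a < a + 1 / (real k + 1)" by simp
      thus "\<exists>y\<in>U. y < a + 1 / (real k + 1)"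
        using cInf_less_iff[OF ne bdd] unfolding a_def by blast
    qed
    then obtain f where f: "\<And>k. f k \<in> U \<and> f k < a + 1 / (real k + 1)" by metis
    show ?thesis
    proof (intro exI[of _ f] conjI ballI)
      show "range f \<subseteq> U" using f by auto
      fix y assume y: "y \<in> U"
      hence "a < y" using lo nin by (metis order_le_less)
      then obtain k where k: "inverse (real (Suc k)) < y - a" using reals_Archimedean[of "y - a"] by auto
      have "f k < a + 1 / (real k + 1)" using f by blast
      also have "\<dots> < y" using k by (simp add: inverse_eq_divide add.commute)
      finally show "\<exists>k. f k \<le> y" by (intro exI[of _ k]) simp
    qed
  qed
next
  case nb: False
  have "\<forall>k::nat. \<exists>y\<in>U. y \<le> - real k"
    using nb unfolding bdd_below_def by (meson linorder_not_le less_imp_le)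
  then obtain f where f: "\<And>k. f k \<in> U \<and> f k \<le> - real k" by metis
  show ?thesis
  proof (intro exI[of _ f] conjI ballI)
    show "range f \<subseteq> U" using f by auto
    fix y assume "y \<in> U"
    obtain k :: nat where "- y \<le> real k" using real_arch_simple by blast
    hence "f k \<le> y" using f[of k] by linarith
    thus "\<exists>k. f k \<le> y" by blast
  qed
qed

lemma lborel_below: "emeasure lborel {s::real. 0 \<le> s \<and> ennreal s < e} = e"
proof (cases e)
  case (real r)
  hence "{s::real. 0 \<le> s \<and> ennreal s < e} = {0..<r}"
    by (auto simp: ennreal_less_iff)
  thus ?thesis using real by simp
next
  case top
  hence eq: "{s::real. 0 \<le> s \<and> ennreal s < e} = {0..}" by auto
  have "ennreal (real n) \<le> emeasure lborel {0::real..}" for n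
  proof -
    have "ennreal (real n) = emeasure lborel {0::real..<real n}" by simp
    also have "\<dots> \<le> emeasure lborel {0::real..}" by (rule emeasure_mono) auto
    finally show ?thesis .
  qed
  hence "(SUP n. of_nat n :: ennreal) \<le> emeasure lborel {0::real..}"
    by (intro SUP_least) (simp add: ennreal_of_nat_eq_real_of_nat)
  hence "emeasure lborel {0::real..} = \<infinity>"
    by (simp add: ennreal_SUP_of_nat_eq_top top_unique)
  thus ?thesis using eq top by simp
qed


definition Gf :: "real set \<Rightarrow> (real \<Rightarrow> real) \<Rightarrow> real \<Rightarrow> ennreal" where
  "Gf T \<phi> y = (SUP l\<in>T. ennreal (l * y - \<phi> l))"

lemma Gf_mono: assumes T: "T \<subseteq> {0<..}" and y: "y \<le> y'" shows "Gf T \<phi> y \<le> Gf T \<phi> y'"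
  unfolding Gf_def
proof (rule SUP_mono)
  fix l assume l: "l \<in> T"
  hence "l * y \<le> l * y'" using T y by (intro mult_left_mono) auto
  thus "\<exists>m\<in>T. ennreal (l * y - \<phi> l) \<le> ennreal (m * y' - \<phi> m)"
    using l by (intro bexI[of _ l] ennreal_leI) auto
qed

lemma Gf_meas: assumes T: "T \<subseteq> {0<..}" shows "Gf T \<phi> \<in> borel_measurable borel"
proof (rule borel_measurableI_greater)
  fix c
  have "{x. c < Gf T \<phi> x} \<in> sets borel"
    by (rule upset_borel) (use Gf_mono[OF T] in \<open>auto intro: less_le_trans\<close>)
  thus "{x \<in> space borel. c < Gf T \<phi> x} \<in> sets borel" by simp
qed

lemma Gf_tail:
  fixes P :: "'a measure" and S :: "'a \<Rightarrow> real"
  assumes P: "prob_space P" and S[measurable]: "S \<in> borel_measurable P" and T: "T \<subseteq> {0<..}"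
    and E: "\<And>l. l \<in> T \<Longrightarrow> (\<integral>\<^sup>+x. ennreal (exp (l * S x - \<phi> l)) \<partial>P) \<le> 1"
    and s: "0 \<le> s"
  shows "emeasure P {x\<in>space P. ennreal s < Gf T \<phi> (S x)} \<le> ennreal (exp (-s))"
proof -
  define U where "U = {y. ennreal s < Gf T \<phi> y}"
  have up: "\<And>x y. x \<in> U \<Longrightarrow> x \<le> y \<Longrightarrow> y \<in> U"
    unfolding U_def using Gf_mono[OF T] by (auto intro: less_le_trans)
  have fact1: "emeasure P {x\<in>space P. y0 \<le> S x} \<le> ennreal (exp (-s))" if y0: "y0 \<in> U" for y0
  proof -
    obtain l where l: "l \<in> T" "ennreal s < ennreal (l * y0 - \<phi> l)"
      using y0 unfolding U_def Gf_def by (auto simp: less_SUP_iff)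
    have lt: "s < l * y0 - \<phi> l" using l(2) s by (simp add: ennreal_less_iff)
    have lpos: "0 < l" using l(1) T by auto
    have "emeasure P {x\<in>space P. y0 \<le> S x} = (\<integral>\<^sup>+x. indicator {x\<in>space P. y0 \<le> S x} x \<partial>P)"
      by (rule nn_integral_indicator[symmetric]) measurable
    also have "\<dots> \<le> (\<integral>\<^sup>+x. ennreal (exp (-s)) * ennreal (exp (l * S x - \<phi> l)) \<partial>P)"
    proof (rule nn_integral_mono)
      fix x assume x: "x \<in> space P"
      show "indicator {x\<in>space P. y0 \<le> S x} x \<le> ennreal (exp (-s)) * ennreal (exp (l * S x - \<phi> l))"
      proof (cases "y0 \<le> S x")
        case True
        have "l * y0 \<le> l * S x" using True lpos by (intro mult_left_mono) auto
        hence "0 \<le> l * S x - \<phi> l - s" using lt by linarith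
        hence "1 \<le> exp (l * S x - \<phi> l - s)" by simp
        also have "exp (l * S x - \<phi> l - s) = exp (-s) * exp (l * S x - \<phi> l)"
          by (simp flip: exp_add)
        finally have "ennreal 1 \<le> ennreal (exp (-s) * exp (l * S x - \<phi> l))" by (rule ennreal_leI)
        thus ?thesis using x True by (simp add: ennreal_mult)
      qed simp
    qed
    also have "\<dots> = ennreal (exp (-s)) * (\<integral>\<^sup>+x. ennreal (exp (l * S x - \<phi> l)) \<partial>P)"
      by (rule nn_integral_cmult) measurable
    also have "\<dots> \<le> ennreal (exp (-s)) * 1" by (intro mult_left_mono E l) simp
    finally show ?thesis by simp
  qed
  show ?thesis
  proof (cases "U = {}")
    case True
    hence e: "{x\<in>space P. ennreal s < Gf T \<phi> (S x)} = {}" unfolding U_def by auto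
    show ?thesis by (subst e) simp
  next
    case False
    obtain f :: "nat \<Rightarrow> real" where f: "range f \<subseteq> U" "\<forall>y\<in>U. \<exists>k. f k \<le> y"
    proof -
      have "\<exists>f::nat\<Rightarrow>real. range f \<subseteq> U \<and> (\<forall>y\<in>U. \<exists>k. f k \<le> y)"
        apply (rule coinitial_seq) apply (erule up, assumption) by (rule False)
      thus ?thesis using that by blast
    qed
    define m where "m k = Min (f ` {..k})" for k
    define A where "A k = {x\<in>space P. m k \<le> S x}" for k
    have mU: "m k \<in> U" for k
    proof -
      have "m k \<in> f ` {..k}" unfolding m_def by (rule Min_in) auto
      thus ?thesis using f(1) by auto
    qed
    have Ameas: "range A \<subseteq> sets P" unfolding A_def by auto
    have Ainc: "incseq A"
    proof (rule incseq_SucI)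
      fix k
      have "m (Suc k) \<le> m k" unfolding m_def by (rule Min_antimono) auto
      thus "A k \<subseteq> A (Suc k)" unfolding A_def by auto
    qed
    have sub: "{x\<in>space P. ennreal s < Gf T \<phi> (S x)} \<subseteq> (\<Union>k. A k)"
    proof
      fix x assume x: "x \<in> {x\<in>space P. ennreal s < Gf T \<phi> (S x)}"
      hence "S x \<in> U" unfolding U_def by simp
      then obtain k where k: "f k \<le> S x" using f(2) by blast
      have "m k \<le> f k" unfolding m_def by (rule Min_le) auto
      thus "x \<in> (\<Union>k. A k)" using k x unfolding A_def by (auto intro!: exI[of _ k])
    qed
    have "emeasure P {x\<in>space P. ennreal s < Gf T \<phi> (S x)} \<le> emeasure P (\<Union>k. A k)"
      by (rule emeasure_mono[OF sub]) (use Ameas in auto)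
    also have "\<dots> = (SUP k. emeasure P (A k))" by (rule SUP_emeasure_incseq[symmetric, OF Ameas Ainc])
    also have "\<dots> \<le> ennreal (exp (-s))"
      by (rule SUP_least) (unfold A_def, rule fact1[OF mU])
    finally show ?thesis .
  qed
qed

lemma Gf_expect:
  fixes P :: "'a measure" and S :: "'a \<Rightarrow> real"
  assumes P: "prob_space P" and S[measurable]: "S \<in> borel_measurable P" and T: "T \<subseteq> {0<..}"
    and E: "\<And>l. l \<in> T \<Longrightarrow> (\<integral>\<^sup>+x. ennreal (exp (l * S x - \<phi> l)) \<partial>P) \<le> 1"
  shows "(\<integral>\<^sup>+x. Gf T \<phi> (S x) \<partial>P) \<le> 1"
proof -
  define F where "F x = Gf T \<phi> (S x)" for x
  have F[measurable]: "F \<in> borel_measurable P"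
    unfolding F_def by (rule measurable_compose[OF S Gf_meas[OF T]])
  interpret pair_sigma_finite P lborel
    unfolding pair_sigma_finite_def
    using prob_space_imp_sigma_finite[OF P] lborel.sigma_finite_measure_axioms by blast
  define H where "H x s = (if 0 \<le> s \<and> ennreal s < F x then 1 else 0 :: ennreal)" for x s
  have Hm: "case_prod H \<in> borel_measurable (P \<Otimes>\<^sub>M lborel)"
    unfolding H_def by measurable
  have inner: "(\<integral>\<^sup>+s. H x s \<partial>lborel) = F x" for x
  proof -
    have "(\<integral>\<^sup>+s. H x s \<partial>lborel) = (\<integral>\<^sup>+s. indicator {s. 0 \<le> s \<and> ennreal s < F x} s \<partial>lborel)"
      unfolding H_def by (intro nn_integral_cong) (simp add: indicator_def)
    also have "\<dots> = emeasure lborel {s. 0 \<le> s \<and> ennreal s < F x}"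
      by (rule nn_integral_indicator) measurable
    also have "\<dots> = F x" by (rule lborel_below)
    finally show ?thesis .
  qed
  have inner2: "(\<integral>\<^sup>+x. H x s \<partial>P) \<le> ennreal (exp (-s)) * indicator {0..} s" for s
  proof (cases "0 \<le> s")
    case True
    have "(\<integral>\<^sup>+x. H x s \<partial>P) = (\<integral>\<^sup>+x. indicator {x\<in>space P. ennreal s < F x} x \<partial>P)"
      unfolding H_def using True by (intro nn_integral_cong) (simp add: indicator_def)
    also have "\<dots> = emeasure P {x\<in>space P. ennreal s < F x}"
      by (rule nn_integral_indicator) measurable
    also have "\<dots> \<le> ennreal (exp (-s))" unfolding F_def by (rule Gf_tail[OF P S T E True])
    finally show ?thesis using True by simp
  next
    case False
    thus ?thesis unfolding H_def by simp
  qed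
  have "(\<integral>\<^sup>+x. F x \<partial>P) = (\<integral>\<^sup>+x. (\<integral>\<^sup>+s. H x s \<partial>lborel) \<partial>P)" by (simp add: inner)
  also have "\<dots> = (\<integral>\<^sup>+s. (\<integral>\<^sup>+x. H x s \<partial>P) \<partial>lborel)" by (rule Fubini'[OF Hm, symmetric])
  also have "\<dots> \<le> (\<integral>\<^sup>+s. ennreal (exp (-s)) * indicator {0..} s \<partial>lborel)"
    by (rule nn_integral_mono) (rule inner2)
  also have "\<dots> = 1" using nn_intergal_power_times_exp_Ici[of 0] by simp
  finally show ?thesis unfolding F_def .
qed


lemma ereal_le_enn: "ereal v \<le> enn2ereal (ennreal v)"
  by (cases "0 \<le> v") (auto simp: ennreal_neg zero_ennreal.rep_eq)

lemma ereal_le_enn_mono: "ennreal v \<le> G \<Longrightarrow> ereal v \<le> enn2ereal G"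
  using ereal_le_enn[of v] less_eq_ennreal.rep_eq[of "ennreal v" G] by auto


lemma amgm_aux:
  fixes t w :: real
  assumes t: "0 < t" and w: "0 \<le> w"
  shows "w \<le> (t/2) * min 1 (w\<^sup>2) + (1 + w\<^sup>2) / (2*t)"
proof -
  have key: "2*t*w \<le> t*t*min 1 (w\<^sup>2) + (1 + w\<^sup>2)"
  proof (cases "w \<le> 1")
    case True
    hence "w\<^sup>2 \<le> 1" using w by (simp add: power_le_one)
    hence m: "min 1 (w\<^sup>2) = w\<^sup>2" by simp
    have "0 \<le> (t*w - 1)\<^sup>2" by simp
    hence h1: "0 \<le> t*t*(w*w) - 2*t*w + 1" by (simp add: power2_eq_square algebra_simps)
    have h2: "0 \<le> w*w" by simp
    have "2*t*w \<le> t*t*(w*w) + (1 + w*w)" using h1 h2 by linarith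
    thus ?thesis unfolding m by (simp add: power2_eq_square)
  next
    case False
    hence "1 \<le> w\<^sup>2" using w by (simp add: one_le_power)
    hence m: "min 1 (w\<^sup>2) = 1" by simp
    have "0 \<le> (t - w)\<^sup>2" by simp
    hence h1: "0 \<le> t*t - 2*t*w + w*w" by (simp add: power2_eq_square algebra_simps)
    have "2*t*w \<le> t*t*1 + (1 + w*w)" using h1 by linarith
    thus ?thesis unfolding m by (simp add: power2_eq_square)
  qed
  have eq: "(t/2) * min 1 (w\<^sup>2) + (1 + w\<^sup>2) / (2*t) = (t*t*min 1 (w\<^sup>2) + (1 + w\<^sup>2)) / (2*t)"
    using t by (simp add: field_simps)
  show ?thesis unfolding eq using key t by (simp add: le_divide_eq algebra_simps)
qed

lemma ennreal_add_ge: "ennreal (x + y) \<le> ennreal x + ennreal y"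
proof (cases "0 \<le> x")
  case True
  show ?thesis
  proof (cases "0 \<le> y")
    case True
    thus ?thesis using \<open>0 \<le> x\<close> by (simp add: ennreal_plus)
  next
    case False
    hence "ennreal (x + y) \<le> ennreal x" by (intro ennreal_leI) simp
    thus ?thesis by (rule order_trans) simp
  qed
next
  case False
  hence "ennreal (x + y) \<le> ennreal y" by (intro ennreal_leI) simp
  thus ?thesis by (rule order_trans) simp
qed

lemma min_ennreal: "0 \<le> v \<Longrightarrow> min 1 (ennreal v) = ennreal (min 1 v)"
  by (cases "v \<le> 1") (auto simp: min_def ennreal_le_iff ennreal_leI)

locale EF =
  fixes \<gamma> :: "real measure" and \<Theta> :: "real set"
  assumes sets_\<gamma>: "sets \<gamma> = sets borel"
    and open_\<Theta>: "open \<Theta>" and ne_\<Theta>: "\<Theta> \<noteq> {}"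
    and sub_\<Theta>: "\<Theta> \<subseteq> natparam \<gamma>"
    and strict: "strictly_convex_on (natparam \<gamma>) (logpart \<gamma>)"
begin

abbreviation "B \<equiv> logpart \<gamma>"
definition Z :: "real \<Rightarrow> real" where "Z t = (\<integral>x. exp (t * x) \<partial>\<gamma>)"

lemma meas: "f \<in> borel_measurable borel \<Longrightarrow> f \<in> borel_measurable \<gamma>"
  using measurable_cong_sets[OF sets_\<gamma> refl] by blast

lemma B_eq: "B t = ln (Z t)" by (simp add: logpart_def Z_def)

lemma natparam_nn: "t \<in> natparam \<gamma> \<Longrightarrow> (\<integral>\<^sup>+ x. ennreal (exp (t * x)) \<partial>\<gamma>) < \<infinity>"
  by (simp add: natparam_def)

lemma natparam_integrable: "t \<in> natparam \<gamma> \<Longrightarrow> integrable \<gamma> (\<lambda>x. exp (t*x))"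
  apply (rule integrableI_bounded)
   apply (rule meas, simp)
  using natparam_nn by simp

lemma nn_Z: "t \<in> natparam \<gamma> \<Longrightarrow> (\<integral>\<^sup>+x. ennreal (exp (t*x)) \<partial>\<gamma>) = ennreal (Z t)"
  unfolding Z_def by (rule nn_integral_eq_integral[OF natparam_integrable]) auto

lemma space_nonzero: "emeasure \<gamma> (space \<gamma>) \<noteq> 0"
proof
  assume h: "emeasure \<gamma> (space \<gamma>) = 0"
  have ae: "AE x in \<gamma>. False" using h by (rule emeasure_0_AE)
  have "\<And>t. Z t = 0" unfolding Z_def
    using ae by (subst integral_cong_AE[where g="\<lambda>_. 0"]) (auto intro: meas)
  hence B0: "\<And>t. B t = 0" by (simp add: B_eq)
  have "(\<integral>\<^sup>+ x. ennreal (exp (t * x)) \<partial>\<gamma>) = 0" for t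
    using ae by (subst nn_integral_cong_AE[where v="\<lambda>_. 0"]) auto
  hence "natparam \<gamma> = UNIV" by (auto simp: natparam_def)
  with strict have "B ((1 - 1/2) * 0 + (1/2) * 1) < (1 - 1/2) * B 0 + (1/2) * B 1"
    unfolding strictly_convex_on_def apply (elim conjE) apply (drule bspec[of _ _ 0], simp) apply (drule bspec[of _ _ 1], simp) by (drule spec[of _ "1/2"]) simp
  thus False using B0 by simp
qed

lemma Z_pos: "t \<in> natparam \<gamma> \<Longrightarrow> 0 < Z t"
proof -
  assume t: "t \<in> natparam \<gamma>"
  have "(\<integral>\<^sup>+x. ennreal (exp (t*x)) \<partial>\<gamma>) \<noteq> 0"
  proof
    assume "(\<integral>\<^sup>+x. ennreal (exp (t*x)) \<partial>\<gamma>) = 0"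
    hence "AE x in \<gamma>. ennreal (exp (t*x)) = 0"
      by (subst (asm) nn_integral_0_iff_AE) (auto intro: meas)
    hence "AE x in \<gamma>. False" by simp
    thus False using space_nonzero by (metis ae_filter_eq_bot_iff eventually_False)
  qed
  moreover have "0 \<le> Z t" unfolding Z_def by simp
  ultimately show ?thesis using nn_Z[OF t] by (simp add: less_le)
qed

lemma exp_B: "t \<in> natparam \<gamma> \<Longrightarrow> exp (B t) = Z t"
  using Z_pos by (simp add: B_eq)

lemma convex_natparam: "convex (natparam \<gamma>)"
  using strict by (simp add: strictly_convex_on_def)

lemma convex_B: "convex_on (natparam \<gamma>) B"
proof (rule convex_onI)
  fix t x y :: real assume "0 < t" "t < 1" "x \<in> natparam \<gamma>" "y \<in> natparam \<gamma>"
  thus "B ((1 - t) *\<^sub>R x + t *\<^sub>R y) \<le> (1 - t) * B x + t * B y"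
  proof (cases "x = y")
    case False
    with strict \<open>0 < t\<close> \<open>t < 1\<close> \<open>x \<in> natparam \<gamma>\<close> \<open>y \<in> natparam \<gamma>\<close>
    have "B ((1 - t) * x + t * y) < (1 - t) * B x + t * B y"
      unfolding strictly_convex_on_def by blast
    thus ?thesis by simp
  qed (simp add: algebra_simps)
qed (rule convex_natparam)



lemma exp_quad_upper: "exp u - 1 - u \<le> u\<^sup>2 * exp \<bar>u\<bar>" for u :: real
proof -
  have e1: "exp (-u) \<ge> 1 - u" using exp_ge_add_one_self[of "-u"] by simp
  have e2: "exp u \<ge> 1 + u" using exp_ge_add_one_self[of u] by simp
  have em: "exp u * exp (-u) = 1" by (simp add: exp_minus)
  have h1: "exp u - 1 - u \<le> u * (exp u - 1)"
  proof (cases "u \<ge> 1")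
    case True
    have a: "exp u * (1 - u) \<le> 0" using True by (simp add: mult_nonneg_nonpos)
    have b: "exp u * (1 - u) = exp u - u * exp u" "u * (exp u - 1) = u * exp u - u"
      by (simp_all add: algebra_simps)
    show ?thesis using a b by linarith
  next
    case False
    have "exp u * (1 - u) \<le> exp u * exp (-u)"
      using e1 by (intro mult_left_mono) auto
    thus ?thesis using em by (simp add: algebra_simps)
  qed
  have h2: "u * (exp u - 1) \<le> u\<^sup>2 * exp \<bar>u\<bar>"
  proof (cases "u \<ge> 0")
    case True
    have "exp u * (1 - u) \<le> exp u * exp (-u)"
      using e1 by (intro mult_left_mono) auto
    hence "exp u - 1 \<le> u * exp u" using em by (simp add: algebra_simps)
    hence "u * (exp u - 1) \<le> u * (u * exp u)" using True by (intro mult_left_mono)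
    thus ?thesis using True by (simp add: power2_eq_square)
  next
    case False
    have "u * (exp u - 1) = (-u) * (1 - exp u)" by (simp add: algebra_simps)
    also have "\<dots> \<le> (-u) * (-u)" using False e2 by (intro mult_left_mono) (linarith, linarith)
    also have "\<dots> = u\<^sup>2 * 1" by (simp add: power2_eq_square)
    also have "\<dots> \<le> u\<^sup>2 * exp \<bar>u\<bar>" by (intro mult_left_mono) auto
    finally show ?thesis .
  qed
  from h1 h2 show ?thesis by linarith
qed

lemma exp_quad_lower: "0 \<le> exp u - 1 - u" for u :: real
  using exp_ge_add_one_self[of u] by linarith

lemma sq_le_exp: "0 < d \<Longrightarrow> x\<^sup>2 \<le> (4 / d\<^sup>2) * exp (d * \<bar>x\<bar>)" for x d :: real
proof -
  assume d: "0 < d"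
  have a: "0 \<le> d * \<bar>x\<bar> / 2" using d by simp
  have "d * \<bar>x\<bar> / 2 \<le> exp (d * \<bar>x\<bar> / 2)"
    using exp_ge_add_one_self[of "d * \<bar>x\<bar> / 2"] by linarith
  hence "(d * \<bar>x\<bar> / 2)\<^sup>2 \<le> (exp (d * \<bar>x\<bar> / 2))\<^sup>2"
    using a by (intro power_mono) auto
  also have "(exp (d * \<bar>x\<bar> / 2))\<^sup>2 = exp (d * \<bar>x\<bar>)"
    by (simp add: power2_eq_square flip: exp_add)
  finally have "d\<^sup>2 * x\<^sup>2 / 4 \<le> exp (d * \<bar>x\<bar>)" by (simp add: power_mult_distrib power_divide)
  thus ?thesis using d by (simp add: field_simps)
qed

lemma exp_abs_le: "exp (c * \<bar>x\<bar>) \<le> exp (c * x) + exp (- c * x)" for c x :: real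
  by (cases "x \<ge> 0") (auto simp: add_increasing add_increasing2)

lemma deriv_from_quad:
  fixes f :: "real \<Rightarrow> real"
  assumes d: "0 < d" and q: "\<And>h. \<bar>h\<bar> \<le> d \<Longrightarrow> \<bar>f (x + h) - f x - h * D\<bar> \<le> C * h\<^sup>2"
  shows "(f has_real_derivative D) (at x)"
proof -
  have "((\<lambda>h. (f (x + h) - f x) / h - D) \<longlongrightarrow> 0) (at 0)"
  proof (rule Lim_null_comparison)
    have "\<forall>h. h \<noteq> 0 \<and> dist h 0 < d \<longrightarrow> norm ((f (x + h) - f x) / h - D) \<le> C * \<bar>h\<bar>"
    proof (intro allI impI)
      fix h :: real assume "h \<noteq> 0 \<and> dist h 0 < d"
      hence h0: "h \<noteq> 0" and hd: "\<bar>h\<bar> \<le> d" by auto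
      have "(f (x + h) - f x) / h - D = (f (x + h) - f x - h * D) / h"
        using h0 by (simp add: field_simps)
      hence "norm ((f (x + h) - f x) / h - D) = \<bar>f (x + h) - f x - h * D\<bar> / \<bar>h\<bar>"
        by simp
      also have "\<dots> \<le> C * h\<^sup>2 / \<bar>h\<bar>" using q[OF hd] by (intro divide_right_mono) auto
      also have "\<dots> = C * \<bar>h\<bar>" using h0 by (simp add: power2_eq_square field_simps abs_mult_self_eq)
      finally show "norm ((f (x + h) - f x) / h - D) \<le> C * \<bar>h\<bar>" .
    qed
    thus "\<forall>\<^sub>F h in at 0. norm ((f (x + h) - f x) / h - D) \<le> C * \<bar>h\<bar>"
      using d unfolding eventually_at by blast
    show "((\<lambda>h. C * \<bar>h\<bar>) \<longlongrightarrow> 0) (at 0)"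
      by (auto intro!: tendsto_eq_intros)
  qed
  hence "((\<lambda>h. (f (x + h) - f x) / h) \<longlongrightarrow> D) (at 0)"
    by (simp add: LIM_zero_iff)
  thus ?thesis by (simp add: DERIV_def)
qed


lemma natparam_between: "a \<in> natparam \<gamma> \<Longrightarrow> b \<in> natparam \<gamma> \<Longrightarrow> a \<le> x \<Longrightarrow> x \<le> b \<Longrightarrow> x \<in> natparam \<gamma>"
  using convex_natparam unfolding is_interval_convex_1[symmetric] is_interval_1 by blast

lemma Z_deriv:
  assumes d: "0 < d" and p1: "\<theta> + 2*d \<in> natparam \<gamma>" and p2: "\<theta> - 2*d \<in> natparam \<gamma>"
  shows "(Z has_real_derivative (\<integral>x. x * exp (\<theta>*x) \<partial>\<gamma>)) (at \<theta>)"
proof -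
  define W where "W x = (4/d\<^sup>2) * (exp ((\<theta> + 2*d)*x) + exp ((\<theta> - 2*d)*x))" for x
  have intW: "integrable \<gamma> W" unfolding W_def
    by (intro integrable_mult_right Bochner_Integration.integrable_add natparam_integrable p1 p2)
  have pt: "\<theta> \<in> natparam \<gamma>" using natparam_between[OF p2 p1] d by auto
  have key: "x\<^sup>2 * exp (d*\<bar>x\<bar>) * exp (\<theta>*x) \<le> W x" for x
  proof -
    have "x\<^sup>2 * exp (d*\<bar>x\<bar>) \<le> (4/d\<^sup>2) * exp (d*\<bar>x\<bar>) * exp (d*\<bar>x\<bar>)"
      using sq_le_exp[OF d, of x] by (intro mult_right_mono) auto
    also have "\<dots> = (4/d\<^sup>2) * exp ((2*d)*\<bar>x\<bar>)"
      by (simp add: mult.assoc flip: exp_add)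
    also have "\<dots> \<le> (4/d\<^sup>2) * (exp ((2*d)*x) + exp (-(2*d)*x))"
      using exp_abs_le[of "2*d" x] by (intro mult_left_mono) auto
    finally have "x\<^sup>2 * exp (d*\<bar>x\<bar>) * exp (\<theta>*x) \<le> (4/d\<^sup>2) * (exp ((2*d)*x) + exp (-(2*d)*x)) * exp (\<theta>*x)"
      by (intro mult_right_mono) auto
    also have "\<dots> = W x" unfolding W_def
      by (simp add: algebra_simps flip: exp_add)
    finally show ?thesis .
  qed
  have intZ1: "integrable \<gamma> (\<lambda>x. x * exp (\<theta>*x))"
  proof (rule Bochner_Integration.integrable_bound[where f="\<lambda>x. exp (\<theta>*x) + W x"])
    show "integrable \<gamma> (\<lambda>x. exp (\<theta>*x) + W x)"
      by (intro Bochner_Integration.integrable_add natparam_integrable pt intW)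
    show "(\<lambda>x. x * exp (\<theta>*x)) \<in> borel_measurable \<gamma>" by (intro meas) simp
    show "AE x in \<gamma>. norm (x * exp (\<theta>*x)) \<le> norm (exp (\<theta>*x) + W x)"
    proof (intro AE_I2)
      fix x
      have W0: "0 \<le> W x" unfolding W_def by simp
      have a: "0 \<le> (\<bar>x\<bar> - 1) * (\<bar>x\<bar> - 1)" by simp
      have b: "(\<bar>x\<bar> - 1) * (\<bar>x\<bar> - 1) = x\<^sup>2 - 2*\<bar>x\<bar> + 1"
        by (simp add: algebra_simps power2_eq_square)
      have "\<bar>x\<bar> \<le> 1 + x\<^sup>2" using a b by linarith
      hence c1: "\<bar>x\<bar> * exp (\<theta>*x) \<le> (1 + x\<^sup>2) * exp (\<theta>*x)" by (intro mult_right_mono) auto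
      have "x\<^sup>2 * 1 \<le> x\<^sup>2 * exp (d*\<bar>x\<bar>)" using d by (intro mult_left_mono) auto
      hence c2: "x\<^sup>2 * exp (\<theta>*x) \<le> x\<^sup>2 * exp (d*\<bar>x\<bar>) * exp (\<theta>*x)"
        by (intro mult_right_mono) auto
      have c3: "(1 + x\<^sup>2) * exp (\<theta>*x) = exp (\<theta>*x) + x\<^sup>2 * exp (\<theta>*x)" by (simp add: algebra_simps)
      have "\<bar>x\<bar> * exp (\<theta>*x) \<le> exp (\<theta>*x) + W x" using c1 c2 c3 key[of x] by linarith
      thus "norm (x * exp (\<theta>*x)) \<le> norm (exp (\<theta>*x) + W x)" using W0 by (simp add: abs_mult)
    qed
  qed
  show ?thesis
  proof (rule deriv_from_quad[OF d])
    fix h :: real assume hd: "\<bar>h\<bar> \<le> d"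
    have ph: "\<theta> + h \<in> natparam \<gamma>" using natparam_between[OF p2 p1] hd d by auto
    have eq: "Z (\<theta> + h) - Z \<theta> - h * (\<integral>x. x * exp (\<theta>*x) \<partial>\<gamma>)
        = (\<integral>x. exp ((\<theta>+h)*x) - exp (\<theta>*x) - h * (x * exp (\<theta>*x)) \<partial>\<gamma>)"
      unfolding Z_def
      by (subst Bochner_Integration.integral_diff, (intro Bochner_Integration.integrable_diff integrable_mult_right natparam_integrable ph pt intZ1)+)
         (subst Bochner_Integration.integral_diff, (intro natparam_integrable ph pt)+, simp)
    have bd: "norm (exp ((\<theta>+h)*x) - exp (\<theta>*x) - h * (x * exp (\<theta>*x))) \<le> h\<^sup>2 * W x" for x
    proof -
      have "exp ((\<theta>+h)*x) - exp (\<theta>*x) - h * (x * exp (\<theta>*x)) = exp (\<theta>*x) * (exp (h*x) - 1 - h*x)"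
        by (simp add: algebra_simps flip: exp_add)
      hence "norm (exp ((\<theta>+h)*x) - exp (\<theta>*x) - h * (x * exp (\<theta>*x))) = exp (\<theta>*x) * (exp (h*x) - 1 - h*x)"
        using exp_quad_lower[of "h*x"] by simp
      also have "\<dots> \<le> exp (\<theta>*x) * ((h*x)\<^sup>2 * exp \<bar>h*x\<bar>)"
        using exp_quad_upper[of "h*x"] by (intro mult_left_mono) auto
      also have "\<dots> \<le> exp (\<theta>*x) * ((h*x)\<^sup>2 * exp (d*\<bar>x\<bar>))"
        using hd by (intro mult_left_mono) (auto simp: abs_mult intro!: mult_right_mono)
      also have "\<dots> = h\<^sup>2 * (x\<^sup>2 * exp (d*\<bar>x\<bar>) * exp (\<theta>*x))" by (simp add: algebra_simps power_mult_distrib)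
      also have "\<dots> \<le> h\<^sup>2 * W x" using key[of x] by (intro mult_left_mono) auto
      finally show ?thesis .
    qed
    have "norm (\<integral>x. exp ((\<theta>+h)*x) - exp (\<theta>*x) - h * (x * exp (\<theta>*x)) \<partial>\<gamma>) \<le> (\<integral>x. h\<^sup>2 * W x \<partial>\<gamma>)"
      apply (rule Bochner_Integration.integral_norm_bound_integral)
        apply (intro Bochner_Integration.integrable_diff integrable_mult_right natparam_integrable ph pt intZ1)
       apply (intro integrable_mult_right intW)
      using bd by simp
    hence "\<bar>Z (\<theta> + h) - Z \<theta> - h * (\<integral>x. x * exp (\<theta>*x) \<partial>\<gamma>)\<bar> \<le> (\<integral>x. h\<^sup>2 * W x \<partial>\<gamma>)"
      unfolding eq by simp
    thus "\<bar>Z (\<theta> + h) - Z \<theta> - h * (\<integral>x. x * exp (\<theta>*x) \<partial>\<gamma>)\<bar> \<le> (\<integral>x. W x \<partial>\<gamma>) * h\<^sup>2"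
      by (simp add: mult.commute)
  qed
qed


lemma Theta_ball: "\<theta> \<in> \<Theta> \<Longrightarrow> \<exists>e>0. \<forall>t. \<bar>t - \<theta>\<bar> < e \<longrightarrow> t \<in> \<Theta>"
  using open_\<Theta> unfolding open_dist dist_real_def by (metis abs_minus_commute)

lemma Theta_natparam: "t \<in> \<Theta> \<Longrightarrow> t \<in> natparam \<gamma>" using sub_\<Theta> by blast

lemma B_deriv: assumes th: "\<theta> \<in> \<Theta>" shows "(B has_real_derivative meanp \<gamma> \<theta>) (at \<theta>)"
proof -
  obtain e where e: "e > 0" "\<And>t. \<bar>t - \<theta>\<bar> < e \<Longrightarrow> t \<in> \<Theta>" using Theta_ball[OF th] by blast
  define d where "d = e/4"
  have d: "0 < d" using e by (simp add: d_def)
  have p1: "\<theta> + 2*d \<in> natparam \<gamma>" using e(2)[of "\<theta> + 2*d"] d Theta_natparam by (simp add: d_def)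
  have p2: "\<theta> - 2*d \<in> natparam \<gamma>" using e(2)[of "\<theta> - 2*d"] d Theta_natparam by (simp add: d_def)
  have zp: "0 < Z \<theta>" using Z_pos Theta_natparam th by blast
  have "((\<lambda>t. ln (Z t)) has_real_derivative (1 / Z \<theta>) * (\<integral>x. x * exp (\<theta>*x) \<partial>\<gamma>)) (at \<theta>)"
    by (rule DERIV_chain2[OF DERIV_ln_divide[OF zp] Z_deriv[OF d p1 p2]])
  moreover have "(\<lambda>t. ln (Z t)) = B" by (rule ext) (simp add: B_eq)
  ultimately have D: "(B has_real_derivative (1 / Z \<theta>) * (\<integral>x. x * exp (\<theta>*x) \<partial>\<gamma>)) (at \<theta>)" by simp
  hence "meanp \<gamma> \<theta> = (1 / Z \<theta>) * (\<integral>x. x * exp (\<theta>*x) \<partial>\<gamma>)"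
    unfolding meanp_def by (rule DERIV_imp_deriv)
  with D show ?thesis by simp
qed

lemma B_cont: "\<theta> \<in> \<Theta> \<Longrightarrow> isCont B \<theta>"
  using B_deriv DERIV_isCont by blast

lemma tangent:
  assumes th: "\<theta> \<in> \<Theta>" and t: "t \<in> natparam \<gamma>"
  shows "meanp \<gamma> \<theta> * (t - \<theta>) \<le> B t - B \<theta>"
proof -
  have "\<theta> \<in> interior (natparam \<gamma>)"
    using interior_maximal[OF sub_\<Theta> open_\<Theta>] th by blast
  thus ?thesis
    using convex_on_imp_above_tangent[OF convex_B convex_connected[OF convex_natparam] _ t,
        of \<theta> "meanp \<gamma> \<theta>"] B_deriv[OF th]
    by (simp add: has_field_derivative_at_within)
qed

lemma psi_nonneg: "\<theta> \<in> \<Theta> \<Longrightarrow> l + \<theta> \<in> natparam \<gamma> \<Longrightarrow> 0 \<le> psi \<gamma> \<theta> l"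
  using tangent[of \<theta> "l + \<theta>"] by (simp add: psi_def algebra_simps)

lemma psi_scale:
  assumes th: "\<theta> \<in> \<Theta>" and l: "l + \<theta> \<in> natparam \<gamma>" and s: "0 \<le> s" "s \<le> 1"
  shows "psi \<gamma> \<theta> (s * l) \<le> s * psi \<gamma> \<theta> l"
proof -
  have "B ((1 - s) *\<^sub>R \<theta> + s *\<^sub>R (l + \<theta>)) \<le> (1 - s) * B \<theta> + s * B (l + \<theta>)"
    using convex_onD[OF convex_B s Theta_natparam[OF th] l] .
  moreover have "(1 - s) *\<^sub>R \<theta> + s *\<^sub>R (l + \<theta>) = s * l + \<theta>" by (simp add: algebra_simps)
  ultimately show ?thesis by (simp add: psi_def algebra_simps)
qed

lemma psi_pos:
  assumes th: "\<theta> \<in> \<Theta>" and l: "l + \<theta> \<in> natparam \<gamma>" and l0: "l \<noteq> 0"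
  shows "0 < psi \<gamma> \<theta> l"
proof -
  have tn: "\<theta> \<in> natparam \<gamma>" using Theta_natparam th .
  have "B ((1 - 1/2) * \<theta> + (1/2) * (l + \<theta>)) < (1 - 1/2) * B \<theta> + (1/2) * B (l + \<theta>)"
    using strict unfolding strictly_convex_on_def
    apply (elim conjE) apply (drule bspec[OF _ tn]) apply (drule bspec[OF _ l])
    apply (drule spec[of _ "1/2"]) using l0 by simp
  moreover have "(1 - 1/2) * \<theta> + (1/2) * (l + \<theta>) = l/2 + \<theta>" by (simp add: field_simps)
  ultimately have lt: "B (l/2 + \<theta>) < B \<theta> / 2 + B (l + \<theta>) / 2" by simp
  have "l/2 + \<theta> \<in> natparam \<gamma>"
    using natparam_between[of \<theta> "l+\<theta>" "l/2+\<theta>"] natparam_between[of "l+\<theta>" \<theta> "l/2+\<theta>"] tn l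
    by (cases "l \<ge> 0") auto
  hence "0 \<le> psi \<gamma> \<theta> (l/2)" using psi_nonneg[OF th] by simp
  thus ?thesis using lt by (simp add: psi_def)
qed

lemma psi_star_eq:
  "psi_star \<gamma> \<Theta> \<theta> z = (SUP l\<in>{l. l + \<theta> \<in> \<Theta>}. ereal (l * z - (B (l + \<theta>) - B \<theta>)))"
  unfolding psi_star_def psi_mu_def psi_def by (simp add: algebra_simps)

lemma psi_star_nonneg: "\<theta> \<in> \<Theta> \<Longrightarrow> 0 \<le> psi_star \<gamma> \<Theta> \<theta> z"
  unfolding psi_star_eq by (rule SUP_upper2[of 0]) (auto simp: zero_ereal_def)

lemma psi_star_mu: assumes th: "\<theta> \<in> \<Theta>" shows "psi_star \<gamma> \<Theta> \<theta> (meanp \<gamma> \<theta>) = 0"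
proof (rule antisym)
  show "psi_star \<gamma> \<Theta> \<theta> (meanp \<gamma> \<theta>) \<le> 0"
    unfolding psi_star_eq
  proof (rule SUP_least)
    fix l assume "l \<in> {l. l + \<theta> \<in> \<Theta>}"
    hence "0 \<le> psi \<gamma> \<theta> l" using psi_nonneg[OF th] Theta_natparam by auto
    thus "ereal (l * meanp \<gamma> \<theta> - (B (l + \<theta>) - B \<theta>)) \<le> 0"
      by (simp add: psi_def zero_ereal_def)
  qed
qed (rule psi_star_nonneg[OF th])


lemma psi_star_small:
  assumes th: "\<theta> \<in> \<Theta>" and \<epsilon>: "0 < \<epsilon>"
  shows "\<exists>\<eta>>0. \<forall>w. \<bar>w\<bar> < \<eta> \<longrightarrow> psi_star \<gamma> \<Theta> \<theta> (meanp \<gamma> \<theta> + w) \<le> ereal (\<epsilon> * \<bar>w\<bar>)"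
proof -
  obtain e where e: "e > 0" "\<And>t. \<bar>t - \<theta>\<bar> < e \<Longrightarrow> t \<in> \<Theta>" using Theta_ball[OF th] by blast
  define \<delta> where "\<delta> = min (e/2) (\<epsilon>/2)"
  have \<delta>: "0 < \<delta>" "\<delta> < e" "\<delta> \<le> \<epsilon>" using e \<epsilon> by (auto simp: \<delta>_def)
  have pd1: "\<delta> + \<theta> \<in> natparam \<gamma>" using e(2)[of "\<delta> + \<theta>"] \<delta> Theta_natparam by auto
  have pd2: "-\<delta> + \<theta> \<in> natparam \<gamma>" using e(2)[of "-\<delta> + \<theta>"] \<delta> Theta_natparam by auto
  define \<eta>0 where "\<eta>0 = min (psi \<gamma> \<theta> \<delta>) (psi \<gamma> \<theta> (-\<delta>))"
  have \<eta>0: "0 < \<eta>0" unfolding \<eta>0_def using psi_pos[OF th pd1] psi_pos[OF th pd2] \<delta> by auto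
  show ?thesis
  proof (intro exI[of _ "\<eta>0/\<delta>"] conjI allI impI)
    show "0 < \<eta>0/\<delta>" using \<eta>0 \<delta> by simp
    fix w assume w: "\<bar>w\<bar> < \<eta>0/\<delta>"
    show "psi_star \<gamma> \<Theta> \<theta> (meanp \<gamma> \<theta> + w) \<le> ereal (\<epsilon> * \<bar>w\<bar>)"
      unfolding psi_star_eq
    proof (rule SUP_least)
      fix l assume "l \<in> {l. l + \<theta> \<in> \<Theta>}"
      hence ln: "l + \<theta> \<in> natparam \<gamma>" using Theta_natparam by auto
      have eq: "l * (meanp \<gamma> \<theta> + w) - (B (l + \<theta>) - B \<theta>) = l * w - psi \<gamma> \<theta> l"
        by (simp add: psi_def algebra_simps)
      have lw: "l * w \<le> \<bar>l\<bar> * \<bar>w\<bar>" by (metis abs_ge_self abs_mult)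
      have "l * w - psi \<gamma> \<theta> l \<le> \<epsilon> * \<bar>w\<bar>"
      proof (cases "\<bar>l\<bar> \<le> \<delta>")
        case True
        have "\<bar>l\<bar> * \<bar>w\<bar> \<le> \<delta> * \<bar>w\<bar>" using True by (intro mult_right_mono) auto
        also have "\<dots> \<le> \<epsilon> * \<bar>w\<bar>" using \<delta> by (intro mult_right_mono) auto
        finally show ?thesis using psi_nonneg[OF th ln] lw by linarith
      next
        case False
        define s where "s = \<delta> / \<bar>l\<bar>"
        have lpos: "0 < \<bar>l\<bar>" using False \<delta> by linarith
        have s: "0 \<le> s" "s \<le> 1" using False \<delta> by (auto simp: s_def)
        have sc: "psi \<gamma> \<theta> (s * l) \<le> s * psi \<gamma> \<theta> l" by (rule psi_scale[OF th ln s])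
        have "s * l = \<delta> \<or> s * l = -\<delta>" using lpos by (auto simp: s_def abs_if)
        hence "\<eta>0 \<le> psi \<gamma> \<theta> (s * l)" by (auto simp: \<eta>0_def)
        hence "\<eta>0 \<le> (\<delta> / \<bar>l\<bar>) * psi \<gamma> \<theta> l" using sc by (simp add: s_def)
        hence "\<bar>l\<bar> * \<eta>0 \<le> \<delta> * psi \<gamma> \<theta> l" using lpos by (simp add: field_simps)
        hence pl: "\<bar>l\<bar> * (\<eta>0 / \<delta>) \<le> psi \<gamma> \<theta> l" using \<delta> by (simp add: field_simps)
        have "\<bar>l\<bar> * \<bar>w\<bar> \<le> \<bar>l\<bar> * (\<eta>0 / \<delta>)" using w by (intro mult_left_mono) auto
        hence "l * w - psi \<gamma> \<theta> l \<le> 0" using lw pl by linarith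
        also have "0 \<le> \<epsilon> * \<bar>w\<bar>" using \<epsilon> by simp
        finally show ?thesis .
      qed
      thus "ereal (l * (meanp \<gamma> \<theta> + w) - (B (l + \<theta>) - B \<theta>)) \<le> ereal (\<epsilon> * \<bar>w\<bar>)"
        using eq by simp
    qed
  qed
qed

lemma psi_star_deriv:
  assumes th: "\<theta> \<in> \<Theta>"
  shows "((\<lambda>w. real_of_ereal (psi_star \<gamma> \<Theta> \<theta> w)) has_real_derivative 0) (at (meanp \<gamma> \<theta>))"
  unfolding DERIV_def
proof -
  let ?f = "\<lambda>w. real_of_ereal (psi_star \<gamma> \<Theta> \<theta> w)"
  let ?\<mu> = "meanp \<gamma> \<theta>"
  have f0: "?f ?\<mu> = 0" using psi_star_mu[OF th] by simp
  show "((\<lambda>h. (?f (?\<mu> + h) - ?f ?\<mu>) / h) \<longlongrightarrow> 0) (at 0)"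
    unfolding tendsto_iff
  proof (intro allI impI)
    fix e :: real assume e: "0 < e"
    obtain \<eta> where \<eta>: "\<eta> > 0" "\<And>w. \<bar>w\<bar> < \<eta> \<Longrightarrow> psi_star \<gamma> \<Theta> \<theta> (?\<mu> + w) \<le> ereal (e/2 * \<bar>w\<bar>)"
      using psi_star_small[OF th, of "e/2"] e by auto
    have "\<forall>h. h \<noteq> 0 \<and> dist h 0 < \<eta> \<longrightarrow> dist ((?f (?\<mu> + h) - ?f ?\<mu>) / h) 0 < e"
    proof (intro allI impI)
      fix h :: real assume h: "h \<noteq> 0 \<and> dist h 0 < \<eta>"
      have up: "psi_star \<gamma> \<Theta> \<theta> (?\<mu> + h) \<le> ereal (e/2 * \<bar>h\<bar>)" using \<eta>(2) h by simp
      have lo: "0 \<le> psi_star \<gamma> \<Theta> \<theta> (?\<mu> + h)" by (rule psi_star_nonneg[OF th])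
      obtain r where r: "psi_star \<gamma> \<Theta> \<theta> (?\<mu> + h) = ereal r" "0 \<le> r" "r \<le> e/2 * \<bar>h\<bar>"
        using up lo by (cases "psi_star \<gamma> \<Theta> \<theta> (?\<mu> + h)") auto
      have "dist ((?f (?\<mu> + h) - ?f ?\<mu>) / h) 0 = r / \<bar>h\<bar>" using r(1,2) f0 by simp
      also have "\<dots> \<le> e/2" using r(3) h by (simp add: divide_le_eq)
      also have "\<dots> < e" using e by simp
      finally show "dist ((?f (?\<mu> + h) - ?f ?\<mu>) / h) 0 < e" .
    qed
    thus "\<forall>\<^sub>F h in at 0. dist ((?f (?\<mu> + h) - ?f ?\<mu>) / h) 0 < e"
      using \<eta>(1) unfolding eventually_at by blast
  qed
qed

lemma bregman_eq: "\<theta> \<in> \<Theta> \<Longrightarrow> bregman \<gamma> \<Theta> \<theta> z = psi_star \<gamma> \<Theta> \<theta> z"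
  unfolding bregman_def using psi_star_mu DERIV_imp_deriv[OF psi_star_deriv] by (simp add: zero_ereal_def[symmetric])

lemma bregman_lower:
  assumes th: "\<theta> \<in> \<Theta>" and t: "t \<in> \<Theta>"
  shows "ereal ((t - \<theta>) * z - (B t - B \<theta>)) \<le> bregman \<gamma> \<Theta> \<theta> z"
  unfolding bregman_eq[OF th] psi_star_eq
  by (rule SUP_upper2[of "t - \<theta>"]) (use t in auto)


lemma expfam_sets: "sets (expfam \<gamma> \<theta>) = sets borel"
  by (simp add: expfam_def sets_\<gamma>)

lemma meas_ef: "f \<in> borel_measurable borel \<Longrightarrow> f \<in> borel_measurable (expfam \<gamma> \<theta>)"
  using measurable_cong_sets[OF expfam_sets refl] by blast

lemma expfam_nn:
  assumes t: "\<theta> \<in> natparam \<gamma>" and ta: "\<theta> + a \<in> natparam \<gamma>"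
  shows "(\<integral>\<^sup>+x. ennreal (exp (a*x - c)) \<partial>expfam \<gamma> \<theta>) = ennreal (exp (B (\<theta>+a) - B \<theta> - c))"
proof -
  have "(\<integral>\<^sup>+x. ennreal (exp (a*x - c)) \<partial>expfam \<gamma> \<theta>)
      = (\<integral>\<^sup>+x. ennreal (exp (\<theta>*x - B \<theta>)) * ennreal (exp (a*x - c)) \<partial>\<gamma>)"
    unfolding expfam_def by (rule nn_integral_density) (intro meas, simp)+
  also have "\<dots> = (\<integral>\<^sup>+x. ennreal (exp (- B \<theta> - c)) * ennreal (exp ((\<theta>+a)*x)) \<partial>\<gamma>)"
    by (intro nn_integral_cong) (simp add: ennreal_mult[symmetric] algebra_simps flip: exp_add)
  also have "\<dots> = ennreal (exp (- B \<theta> - c)) * (\<integral>\<^sup>+x. ennreal (exp ((\<theta>+a)*x)) \<partial>\<gamma>)"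
    by (rule nn_integral_cmult) (intro meas, simp)
  also have "\<dots> = ennreal (exp (- B \<theta> - c)) * ennreal (exp (B (\<theta>+a)))"
    using nn_Z[OF ta] exp_B[OF ta] by simp
  also have "\<dots> = ennreal (exp (B (\<theta>+a) - B \<theta> - c))"
    by (simp add: ennreal_mult[symmetric] flip: exp_add)
  finally show ?thesis .
qed

lemma prob_expfam: assumes t: "\<theta> \<in> natparam \<gamma>" shows "prob_space (expfam \<gamma> \<theta>)"
proof (rule prob_spaceI)
  have "emeasure (expfam \<gamma> \<theta>) (space (expfam \<gamma> \<theta>)) = (\<integral>\<^sup>+x. ennreal (exp (0*x - 0)) \<partial>expfam \<gamma> \<theta>)"
    by (simp add: nn_integral_const)
  also have "\<dots> = 1" using expfam_nn[OF t, of 0 0] t by simp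
  finally show "emeasure (expfam \<gamma> \<theta>) (space (expfam \<gamma> \<theta>)) = 1" .
qed

lemma sets_Pn: "sets (Pi\<^sub>M I (\<lambda>_. expfam \<gamma> \<theta>)) = sets (Pi\<^sub>M I (\<lambda>_. (borel :: real measure)))"
  by (rule sets_PiM_cong) (auto simp: expfam_sets)

lemma sets_Pg: "sets (Pi\<^sub>M I (\<lambda>_. \<gamma>)) = sets (Pi\<^sub>M I (\<lambda>_. (borel :: real measure)))"
  by (rule sets_PiM_cong) (auto simp: sets_\<gamma>)

lemma meas_Pn: "f \<in> borel_measurable (Pi\<^sub>M I (\<lambda>_. (borel :: real measure))) \<Longrightarrow> f \<in> borel_measurable (Pi\<^sub>M I (\<lambda>_. expfam \<gamma> \<theta>))"
  using measurable_cong_sets[OF sets_Pn refl] by blast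

lemma prod_exp_integral:
  assumes t: "\<theta> \<in> natparam \<gamma>" and ta: "\<theta> + a \<in> natparam \<gamma>"
  shows "(\<integral>\<^sup>+X. ennreal (exp (a * (\<Sum>i<n. X i) - real n * (B (\<theta>+a) - B \<theta>))) \<partial>Pi\<^sub>M {..<n} (\<lambda>_. expfam \<gamma> \<theta>)) = 1"
proof -
  interpret product_prob_space "\<lambda>_. expfam \<gamma> \<theta>"
    by (rule product_prob_spaceI) (rule prob_expfam[OF t])
  define c where "c = B (\<theta>+a) - B \<theta>"
  have eq: "ennreal (exp (a * (\<Sum>i<n. X i) - real n * c)) = (\<Prod>i<n. ennreal (exp (a * X i - c)))" for X :: "nat \<Rightarrow> real"
  proof -
    have "a * (\<Sum>i<n. X i) - real n * c = (\<Sum>i<n. a * X i - c)"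
      by (simp add: sum_subtractf sum_distrib_left)
    hence "exp (a * (\<Sum>i<n. X i) - real n * c) = (\<Prod>i<n. exp (a * X i - c))"
      by (simp add: exp_sum)
    thus ?thesis by (simp add: prod_ennreal)
  qed
  have "(\<integral>\<^sup>+X. ennreal (exp (a * (\<Sum>i<n. X i) - real n * c)) \<partial>Pi\<^sub>M {..<n} (\<lambda>_. expfam \<gamma> \<theta>))
      = (\<integral>\<^sup>+X. (\<Prod>i\<in>{..<n}. ennreal (exp (a * X i - c))) \<partial>Pi\<^sub>M {..<n} (\<lambda>_. expfam \<gamma> \<theta>))"
    by (simp add: eq)
  also have "\<dots> = (\<Prod>i\<in>{..<n}. (\<integral>\<^sup>+x. ennreal (exp (a * x - c)) \<partial>expfam \<gamma> \<theta>))"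
    by (rule product_nn_integral_prod) (auto intro!: meas_ef)
  also have "\<dots> = 1" using expfam_nn[OF t ta, of c] by (simp add: c_def)
  finally show ?thesis by (simp add: c_def)
qed


lemma pointwise1:
  assumes th: "\<theta> \<in> \<Theta>" and n: "1 \<le> n"
  shows "e2ennreal (ereal (real n) * bregman \<gamma> \<Theta> \<theta> (y / real n))
    \<le> Gf {l. l + \<theta> \<in> \<Theta> \<and> 0 < l} (\<lambda>l. real n * (B (l + \<theta>) - B \<theta>)) y
     + Gf {l. - l + \<theta> \<in> \<Theta> \<and> 0 < l} (\<lambda>l. real n * (B (- l + \<theta>) - B \<theta>)) (- y)"
  (is "_ \<le> ?G1 + ?G2")
proof -
  have np: "0 < ereal (real n)" "ereal (real n) \<noteq> \<infinity>" using n by auto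
  have key: "ereal (l * y - real n * (B (l + \<theta>) - B \<theta>)) \<le> enn2ereal (?G1 + ?G2)"
    if l: "l + \<theta> \<in> \<Theta>" for l
  proof -
    define v where "v = l * y - real n * (B (l + \<theta>) - B \<theta>)"
    have "ennreal v \<le> ?G1 + ?G2"
    proof (cases l "0::real" rule: linorder_cases)
      case greater
      hence "ennreal v \<le> ?G1" unfolding Gf_def v_def using l by (intro SUP_upper2[of l]) auto
      thus ?thesis by (rule order_trans) simp
    next
      case less
      hence "ennreal v \<le> ?G2" unfolding Gf_def v_def using l by (intro SUP_upper2[of "-l"]) (auto simp: add.commute)
      thus ?thesis by (rule order_trans) simp
    next
      case equal
      thus ?thesis by (simp add: v_def)
    qed
    thus ?thesis unfolding v_def by (rule ereal_le_enn_mono)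
  qed
  have "ereal (real n) * bregman \<gamma> \<Theta> \<theta> (y / real n) \<le> enn2ereal (?G1 + ?G2)"
    unfolding bregman_eq[OF th] psi_star_eq
  proof (subst ereal_le_divide_pos[OF np, symmetric], rule SUP_least)
    fix l assume "l \<in> {l. l + \<theta> \<in> \<Theta>}"
    hence l: "l + \<theta> \<in> \<Theta>" by simp
    have "ereal (real n) * ereal (l * (y / real n) - (B (l + \<theta>) - B \<theta>))
        = ereal (l * y - real n * (B (l + \<theta>) - B \<theta>))"
      using n by (simp add: field_simps)
    also have "\<dots> \<le> enn2ereal (?G1 + ?G2)" by (rule key[OF l])
    finally show "ereal (l * (y / real n) - (B (l + \<theta>) - B \<theta>)) \<le> enn2ereal (?G1 + ?G2) / ereal (real n)"
      by (subst ereal_le_divide_pos[OF np])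
  qed
  hence "e2ennreal (ereal (real n) * bregman \<gamma> \<Theta> \<theta> (y / real n)) \<le> e2ennreal (enn2ereal (?G1 + ?G2))"
    by (rule e2ennreal_mono)
  thus ?thesis by simp
qed

lemma part1:
  assumes th: "\<theta> \<in> \<Theta>" and n: "1 \<le> n"
  shows "risk \<gamma> \<Theta> n (\<lambda>X. (\<Sum>i<n. X i) / real n) \<theta> \<le> 2"
proof -
  define P where "P = Pi\<^sub>M {..<n} (\<lambda>_. expfam \<gamma> \<theta>)"
  define S where "S X = (\<Sum>i<n. X i)" for X :: "nat \<Rightarrow> real"
  define T1 where "T1 = {l. l + \<theta> \<in> \<Theta> \<and> 0 < l}"
  define T2 where "T2 = {l. - l + \<theta> \<in> \<Theta> \<and> 0 < l}"
  define \<phi>1 where "\<phi>1 l = real n * (B (l + \<theta>) - B \<theta>)" for l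
  define \<phi>2 where "\<phi>2 l = real n * (B (- l + \<theta>) - B \<theta>)" for l
  have tn: "\<theta> \<in> natparam \<gamma>" using Theta_natparam[OF th] .
  have P: "prob_space P" unfolding P_def by (intro prob_space_PiM prob_expfam tn)
  have S: "S \<in> borel_measurable P" unfolding P_def S_def by (intro meas_Pn) measurable
  have S2: "(\<lambda>X. - S X) \<in> borel_measurable P" using S by measurable
  have T1: "T1 \<subseteq> {0<..}" and T2: "T2 \<subseteq> {0<..}" by (auto simp: T1_def T2_def)
  have E1: "(\<integral>\<^sup>+x. ennreal (exp (l * S x - \<phi>1 l)) \<partial>P) \<le> 1" if l: "l \<in> T1" for l
  proof -
    have "\<theta> + l \<in> natparam \<gamma>" using l Theta_natparam by (auto simp: T1_def add.commute)
    from prod_exp_integral[OF tn this, of n] show ?thesis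
      by (simp add: P_def S_def \<phi>1_def add.commute)
  qed
  have E2: "(\<integral>\<^sup>+x. ennreal (exp (l * (- S x) - \<phi>2 l)) \<partial>P) \<le> 1" if l: "l \<in> T2" for l
  proof -
    have "\<theta> + (-l) \<in> natparam \<gamma>" using l Theta_natparam by (auto simp: T2_def add.commute)
    from prod_exp_integral[OF tn this, of n] show ?thesis
      by (simp add: P_def S_def \<phi>2_def add.commute)
  qed
  have "risk \<gamma> \<Theta> n (\<lambda>X. (\<Sum>i<n. X i) / real n) \<theta>
      \<le> (\<integral>\<^sup>+X. Gf T1 \<phi>1 (S X) + Gf T2 \<phi>2 (- S X) \<partial>P)"
    unfolding risk_def P_def[symmetric]
    by (rule nn_integral_mono) (unfold S_def T1_def T2_def \<phi>1_def \<phi>2_def, rule pointwise1[OF th n])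
  also have "\<dots> = (\<integral>\<^sup>+X. Gf T1 \<phi>1 (S X) \<partial>P) + (\<integral>\<^sup>+X. Gf T2 \<phi>2 (- S X) \<partial>P)"
    by (rule nn_integral_add)
       (rule measurable_compose[OF S Gf_meas[OF T1]], rule measurable_compose[OF S2 Gf_meas[OF T2]])
  also have "\<dots> \<le> 1 + 1"
    by (intro add_mono Gf_expect[OF P S T1 E1] Gf_expect[OF P S2 T2 E2])
  finally show ?thesis by simp
qed


lemma expfam_change:
  assumes t0: "\<theta>0 \<in> natparam \<gamma>" and t1: "\<theta>1 \<in> natparam \<gamma>"
  shows "density (expfam \<gamma> \<theta>0) (\<lambda>x. ennreal (exp ((\<theta>1 - \<theta>0) * x - (B \<theta>1 - B \<theta>0)))) = expfam \<gamma> \<theta>1"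
proof -
  have "density (expfam \<gamma> \<theta>0) (\<lambda>x. ennreal (exp ((\<theta>1 - \<theta>0) * x - (B \<theta>1 - B \<theta>0))))
      = density \<gamma> (\<lambda>x. ennreal (exp (\<theta>0 * x - B \<theta>0)) * ennreal (exp ((\<theta>1 - \<theta>0) * x - (B \<theta>1 - B \<theta>0))))"
    unfolding expfam_def by (rule density_density_eq) (intro meas, simp)+
  also have "(\<lambda>x. ennreal (exp (\<theta>0 * x - B \<theta>0)) * ennreal (exp ((\<theta>1 - \<theta>0) * x - (B \<theta>1 - B \<theta>0))))
      = (\<lambda>x. ennreal (exp (\<theta>1 * x - B \<theta>1)))"
    by (rule ext) (simp add: ennreal_mult[symmetric] algebra_simps flip: exp_add)
  finally show ?thesis by (simp add: expfam_def)
qed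

lemma prod_exp_integral':
  assumes t: "\<theta> \<in> natparam \<gamma>" and ta: "\<theta> + a \<in> natparam \<gamma>"
  shows "(\<integral>\<^sup>+X. ennreal (exp (a * (\<Sum>i<n. X i) - real n * c)) \<partial>Pi\<^sub>M {..<n} (\<lambda>_. expfam \<gamma> \<theta>))
     = ennreal (exp (real n * (B (\<theta>+a) - B \<theta> - c)))"
proof -
  have "(\<integral>\<^sup>+X. ennreal (exp (a * (\<Sum>i<n. X i) - real n * c)) \<partial>Pi\<^sub>M {..<n} (\<lambda>_. expfam \<gamma> \<theta>))
     = (\<integral>\<^sup>+X. ennreal (exp (real n * (B (\<theta>+a) - B \<theta> - c))) * ennreal (exp (a * (\<Sum>i<n. X i) - real n * (B (\<theta>+a) - B \<theta>))) \<partial>Pi\<^sub>M {..<n} (\<lambda>_. expfam \<gamma> \<theta>))"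
    by (intro nn_integral_cong) (simp add: ennreal_mult[symmetric] algebra_simps flip: exp_add)
  also have "\<dots> = ennreal (exp (real n * (B (\<theta>+a) - B \<theta> - c))) * (\<integral>\<^sup>+X. ennreal (exp (a * (\<Sum>i<n. X i) - real n * (B (\<theta>+a) - B \<theta>))) \<partial>Pi\<^sub>M {..<n} (\<lambda>_. expfam \<gamma> \<theta>))"
    by (rule nn_integral_cmult) (intro meas_Pn, measurable)
  also have "\<dots> = ennreal (exp (real n * (B (\<theta>+a) - B \<theta> - c)))"
    using prod_exp_integral[OF t ta, of n] by simp
  finally show ?thesis .
qed

lemma Pn_density:
  assumes t0: "\<theta>0 \<in> natparam \<gamma>" and t1: "\<theta>1 \<in> natparam \<gamma>"
  shows "Pi\<^sub>M {..<n} (\<lambda>_. expfam \<gamma> \<theta>1) = density (Pi\<^sub>M {..<n} (\<lambda>_. expfam \<gamma> \<theta>0))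
           (\<lambda>X. ennreal (exp ((\<theta>1 - \<theta>0) * (\<Sum>i<n. X i) - real n * (B \<theta>1 - B \<theta>0))))"
proof -
  interpret P1: product_prob_space "(\<lambda>_. expfam \<gamma> \<theta>1) :: nat \<Rightarrow> real measure"
    by (rule product_prob_spaceI) (rule prob_expfam[OF t1])
  interpret P0: product_prob_space "(\<lambda>_. expfam \<gamma> \<theta>0) :: nat \<Rightarrow> real measure"
    by (rule product_prob_spaceI) (rule prob_expfam[OF t0])
  define r where "r x = ennreal (exp ((\<theta>1 - \<theta>0) * x - (B \<theta>1 - B \<theta>0)))" for x
  define L where "L X = ennreal (exp ((\<theta>1 - \<theta>0) * (\<Sum>i<n. X i) - real n * (B \<theta>1 - B \<theta>0)))" for X :: "nat \<Rightarrow> real"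
  have Lprod: "L X = (\<Prod>i<n. r (X i))" for X
  proof -
    have "(\<theta>1 - \<theta>0) * (\<Sum>i<n. X i) - real n * (B \<theta>1 - B \<theta>0) = (\<Sum>i<n. (\<theta>1 - \<theta>0) * X i - (B \<theta>1 - B \<theta>0))"
      by (simp add: sum_subtractf sum_distrib_left)
    thus ?thesis unfolding L_def r_def by (simp add: exp_sum prod_ennreal)
  qed
  have Lm: "L \<in> borel_measurable (Pi\<^sub>M {..<n} (\<lambda>_. expfam \<gamma> \<theta>0))"
    unfolding L_def by (intro meas_Pn) measurable
  have rm: "r \<in> borel_measurable (expfam \<gamma> \<theta>0)" unfolding r_def by (intro meas_ef) simp
  have "density (Pi\<^sub>M {..<n} (\<lambda>_. expfam \<gamma> \<theta>0)) L = Pi\<^sub>M {..<n} (\<lambda>_. expfam \<gamma> \<theta>1)"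
  proof (rule P1.PiM_eqI)
    show "sets (density (Pi\<^sub>M {..<n} (\<lambda>_. expfam \<gamma> \<theta>0)) L) = sets (Pi\<^sub>M {..<n} (\<lambda>_. expfam \<gamma> \<theta>1))"
      using sets_Pn[of "{..<n}" \<theta>0] sets_Pn[of "{..<n}" \<theta>1] by simp
  next
    fix A assume A: "\<And>i. i \<in> {..<n} \<Longrightarrow> A i \<in> sets (expfam \<gamma> \<theta>1)"
    have A0: "\<And>i. i \<in> {..<n} \<Longrightarrow> A i \<in> sets (expfam \<gamma> \<theta>0)" using A by (simp add: expfam_sets)
    have PE: "Pi\<^sub>E {..<n} A \<in> sets (Pi\<^sub>M {..<n} (\<lambda>_. expfam \<gamma> \<theta>0))"
      by (rule sets_PiM_I_finite) (auto intro: A0)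
    have "emeasure (density (Pi\<^sub>M {..<n} (\<lambda>_. expfam \<gamma> \<theta>0)) L) (Pi\<^sub>E {..<n} A)
        = (\<integral>\<^sup>+X. L X * indicator (Pi\<^sub>E {..<n} A) X \<partial>Pi\<^sub>M {..<n} (\<lambda>_. expfam \<gamma> \<theta>0))"
      by (rule emeasure_density[OF Lm PE])
    also have "\<dots> = (\<integral>\<^sup>+X. (\<Prod>i\<in>{..<n}. r (X i) * indicator (A i) (X i)) \<partial>Pi\<^sub>M {..<n} (\<lambda>_. expfam \<gamma> \<theta>0))"
    proof (rule nn_integral_cong)
      fix X assume X: "X \<in> space (Pi\<^sub>M {..<n} (\<lambda>_. expfam \<gamma> \<theta>0))"
      hence ext: "X \<in> extensional {..<n}" by (simp add: space_PiM PiE_def)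
      have "indicator (Pi\<^sub>E {..<n} A) X = (\<Prod>i\<in>{..<n}. indicator (A i) (X i) :: ennreal)"
      proof (cases "\<forall>i\<in>{..<n}. X i \<in> A i")
        case True
        hence "X \<in> Pi\<^sub>E {..<n} A" using ext by (auto simp: PiE_def)
        thus ?thesis using True by simp
      next
        case False
        then obtain j where j: "j \<in> {..<n}" "X j \<notin> A j" by blast
        hence "X \<notin> Pi\<^sub>E {..<n} A" by (auto simp: PiE_def)
        moreover have "(\<Prod>i\<in>{..<n}. indicator (A i) (X i) :: ennreal) = 0"
          using j by (intro prod_zero bexI[of _ j]) auto
        ultimately show ?thesis by simp
      qed
      thus "L X * indicator (Pi\<^sub>E {..<n} A) X = (\<Prod>i\<in>{..<n}. r (X i) * indicator (A i) (X i))"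
        by (simp add: Lprod prod.distrib)
    qed
    also have "\<dots> = (\<Prod>i\<in>{..<n}. (\<integral>\<^sup>+x. r x * indicator (A i) x \<partial>expfam \<gamma> \<theta>0))"
      using P0.product_nn_integral_prod[of "{..<n}" "\<lambda>i x. r x * indicator (A i) x"]
      by (auto intro!: borel_measurable_times_ennreal rm borel_measurable_indicator A0)
    also have "\<dots> = (\<Prod>i\<in>{..<n}. emeasure (expfam \<gamma> \<theta>1) (A i))"
    proof (rule prod.cong[OF refl])
      fix i assume i: "i \<in> {..<n}"
      have "emeasure (expfam \<gamma> \<theta>1) (A i) = emeasure (density (expfam \<gamma> \<theta>0) r) (A i)"
      proof -
        have "r = (\<lambda>x. ennreal (exp ((\<theta>1 - \<theta>0) * x - (B \<theta>1 - B \<theta>0))))" by (rule ext) (simp add: r_def)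
        thus ?thesis using expfam_change[OF t0 t1] by simp
      qed
      also have "\<dots> = (\<integral>\<^sup>+x. r x * indicator (A i) x \<partial>expfam \<gamma> \<theta>0)"
        by (rule emeasure_density[OF rm A0[OF i]])
      finally show "(\<integral>\<^sup>+x. r x * indicator (A i) x \<partial>expfam \<gamma> \<theta>0) = emeasure (expfam \<gamma> \<theta>1) (A i)" by simp
    qed
    finally show "emeasure (density (Pi\<^sub>M {..<n} (\<lambda>_. expfam \<gamma> \<theta>0)) L) (Pi\<^sub>E {..<n} A)
        = (\<Prod>i\<in>{..<n}. emeasure (expfam \<gamma> \<theta>1) (A i))" .
  qed simp
  thus ?thesis unfolding L_def by simp
qed


lemma two_point:
  assumes t0: "\<theta>0 \<in> \<Theta>" and t1: "\<theta>1 \<in> \<Theta>" and mT: "(\<theta>0 + \<theta>1) / 2 \<in> \<Theta>"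
    and n: "1 \<le> n"
    and \<Delta>: "(B \<theta>0 + B \<theta>1) / 2 - B ((\<theta>0 + \<theta>1) / 2) = 1 / (2 * real n)"
    and est: "est \<in> borel_measurable (Pi\<^sub>M {..<n} (\<lambda>_. \<gamma>))"
  shows "ennreal (exp (-1) / 2) \<le> risk \<gamma> \<Theta> n est \<theta>0 + risk \<gamma> \<Theta> n est \<theta>1"
proof -
  define m where "m = (\<theta>0 + \<theta>1) / 2"
  define P0 where "P0 = Pi\<^sub>M {..<n} (\<lambda>_. expfam \<gamma> \<theta>0)"
  define P1 where "P1 = Pi\<^sub>M {..<n} (\<lambda>_. expfam \<gamma> \<theta>1)"
  define S where "S X = (\<Sum>i<n. X i)" for X :: "nat \<Rightarrow> real"
  define a where "a = \<theta>1 - \<theta>0"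
  define c where "c = B \<theta>1 - B \<theta>0"
  define L where "L X = ennreal (exp (a * S X - real n * c))" for X
  define h0 where "h0 X = ennreal (real n * ((m - \<theta>0) * est X - (B m - B \<theta>0)))" for X
  define h1 where "h1 X = ennreal (real n * ((m - \<theta>1) * est X - (B m - B \<theta>1)))" for X
  have tn0: "\<theta>0 \<in> natparam \<gamma>" and tn1: "\<theta>1 \<in> natparam \<gamma>" and mn: "m \<in> natparam \<gamma>"
    using Theta_natparam t0 t1 mT by (auto simp: m_def)
  have mT': "m \<in> \<Theta>" using mT by (simp add: m_def)
  have P0: "prob_space P0" unfolding P0_def by (intro prob_space_PiM prob_expfam tn0)
  have estm[measurable]: "est \<in> borel_measurable P0"
    using est measurable_cong_sets[OF sets_Pg[of "{..<n}"] refl] measurable_cong_sets[OF sets_Pn[of "{..<n}" \<theta>0] refl]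
    unfolding P0_def by blast
  have Sm[measurable]: "S \<in> borel_measurable P0" unfolding P0_def S_def by (intro meas_Pn) measurable
  have Lm[measurable]: "L \<in> borel_measurable P0" unfolding L_def by measurable
  have h0m[measurable]: "h0 \<in> borel_measurable P0" unfolding h0_def by measurable
  have h1m[measurable]: "h1 \<in> borel_measurable P0" unfolding h1_def by measurable
  have R0: "(\<integral>\<^sup>+X. h0 X \<partial>P0) \<le> risk \<gamma> \<Theta> n est \<theta>0"
    unfolding risk_def P0_def[symmetric]
  proof (rule nn_integral_mono)
    fix X
    have "ereal (real n) * ereal ((m - \<theta>0) * est X - (B m - B \<theta>0)) \<le> ereal (real n) * bregman \<gamma> \<Theta> \<theta>0 (est X)"
      by (intro ereal_mult_left_mono bregman_lower[OF t0 mT']) simp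
    from e2ennreal_mono[OF this] show "h0 X \<le> e2ennreal (ereal (real n) * bregman \<gamma> \<Theta> \<theta>0 (est X))"
      by (simp add: h0_def)
  qed
  have R1': "(\<integral>\<^sup>+X. h1 X \<partial>P1) \<le> risk \<gamma> \<Theta> n est \<theta>1"
    unfolding risk_def P1_def[symmetric]
  proof (rule nn_integral_mono)
    fix X
    have "ereal (real n) * ereal ((m - \<theta>1) * est X - (B m - B \<theta>1)) \<le> ereal (real n) * bregman \<gamma> \<Theta> \<theta>1 (est X)"
      by (intro ereal_mult_left_mono bregman_lower[OF t1 mT']) simp
    from e2ennreal_mono[OF this] show "h1 X \<le> e2ennreal (ereal (real n) * bregman \<gamma> \<Theta> \<theta>1 (est X))"
      by (simp add: h1_def)
  qed
  have P1eq: "P1 = density P0 L"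
    unfolding P1_def P0_def L_def S_def a_def c_def by (rule Pn_density[OF tn0 tn1])
  have R1: "(\<integral>\<^sup>+X. L X * h1 X \<partial>P0) \<le> risk \<gamma> \<Theta> n est \<theta>1"
    using R1' unfolding P1eq by (subst (asm) nn_integral_density) auto
  have hsum: "1 \<le> h0 X + h1 X" for X
  proof -
    have "real n * ((m - \<theta>0) * est X - (B m - B \<theta>0)) + real n * ((m - \<theta>1) * est X - (B m - B \<theta>1))
        = real n * (2 * ((B \<theta>0 + B \<theta>1) / 2 - B m))"
      by (simp add: m_def field_simps)
    also have "\<dots> = 1" using \<Delta> n by (simp add: m_def)
    finally have "ennreal 1 \<le> h0 X + h1 X"
      unfolding h0_def h1_def by (metis ennreal_add_ge)
    thus ?thesis by simp
  qed
  define A where "A = (\<integral>\<^sup>+X. min 1 (L X) \<partial>P0)"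
  have RA: "A \<le> risk \<gamma> \<Theta> n est \<theta>0 + risk \<gamma> \<Theta> n est \<theta>1"
  proof -
    have "A \<le> (\<integral>\<^sup>+X. h0 X + L X * h1 X \<partial>P0)"
      unfolding A_def
    proof (rule nn_integral_mono)
      fix X
      have "min 1 (L X) = min 1 (L X) * 1" by simp
      also have "\<dots> \<le> min 1 (L X) * (h0 X + h1 X)" by (intro mult_left_mono hsum) simp
      also have "\<dots> = min 1 (L X) * h0 X + min 1 (L X) * h1 X" by (simp add: distrib_left)
      also have "\<dots> \<le> 1 * h0 X + L X * h1 X"
        by (intro add_mono mult_right_mono) auto
      finally show "min 1 (L X) \<le> h0 X + L X * h1 X" by simp
    qed
    also have "\<dots> = (\<integral>\<^sup>+X. h0 X \<partial>P0) + (\<integral>\<^sup>+X. L X * h1 X \<partial>P0)"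
      by (rule nn_integral_add) auto
    also have "\<dots> \<le> risk \<gamma> \<Theta> n est \<theta>0 + risk \<gamma> \<Theta> n est \<theta>1" by (intro add_mono R0 R1)
    finally show ?thesis .
  qed
  \<comment> \<open>lower bound on A via the Hellinger affinity\<close>
  define \<rho> where "\<rho> = exp (-1/2 :: real)"
  define t where "t = 2 / \<rho>"
  have \<rho>: "0 < \<rho>" unfolding \<rho>_def by simp
  have t: "0 < t" unfolding t_def using \<rho> by simp
  define q where "q X = ennreal (exp ((a/2) * S X - real n * (c/2)))" for X
  have qm: "q \<in> borel_measurable P0" unfolding q_def by measurable
  have intq: "(\<integral>\<^sup>+X. q X \<partial>P0) = ennreal \<rho>"
  proof -
    have ta: "\<theta>0 + a/2 \<in> natparam \<gamma>" using mn by (simp add: m_def a_def field_simps)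
    have "(\<integral>\<^sup>+X. q X \<partial>P0) = ennreal (exp (real n * (B (\<theta>0 + a/2) - B \<theta>0 - c/2)))"
      unfolding q_def S_def P0_def by (rule prod_exp_integral'[OF tn0 ta])
    also have "real n * (B (\<theta>0 + a/2) - B \<theta>0 - c/2) = - real n * ((B \<theta>0 + B \<theta>1) / 2 - B m)"
      by (simp add: a_def c_def m_def field_simps)
    also have "\<dots> = -1/2" using \<Delta> n by (simp add: m_def)
    finally show ?thesis by (simp add: \<rho>_def)
  qed
  have intL: "(\<integral>\<^sup>+X. L X \<partial>P0) = 1"
  proof -
    have ta: "\<theta>0 + a \<in> natparam \<gamma>" using tn1 by (simp add: a_def)
    show ?thesis using prod_exp_integral[OF tn0 ta, of n]
      unfolding L_def S_def P0_def by (simp add: a_def c_def)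
  qed
  have qpt: "q X \<le> ennreal (t/2) * min 1 (L X) + ennreal (1/(2*t)) * (1 + L X)" for X
  proof -
    define w where "w = exp ((a/2) * S X - real n * (c/2))"
    have w: "0 \<le> w" unfolding w_def by simp
    have Lw: "L X = ennreal (w\<^sup>2)"
    proof -
      have "w\<^sup>2 = exp (a * S X - real n * c)"
        unfolding w_def power2_eq_square by (simp flip: exp_add)
      thus ?thesis by (simp add: L_def)
    qed
    have "w \<le> (t/2) * min 1 (w\<^sup>2) + (1 + w\<^sup>2) / (2*t)" by (rule amgm_aux[OF t w])
    hence "ennreal w \<le> ennreal ((t/2) * min 1 (w\<^sup>2) + (1 + w\<^sup>2) / (2*t))" by (rule ennreal_leI)
    also have "\<dots> = ennreal (t/2) * min 1 (L X) + ennreal (1/(2*t)) * (1 + L X)"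
      unfolding Lw using t
      by (simp add: min_ennreal ennreal_mult[symmetric] ennreal_plus[symmetric] field_simps del: ennreal_plus)
    finally show ?thesis by (simp add: q_def w_def)
  qed
  have "ennreal \<rho> \<le> (\<integral>\<^sup>+X. ennreal (t/2) * min 1 (L X) + ennreal (1/(2*t)) * (1 + L X) \<partial>P0)"
    unfolding intq[symmetric] by (rule nn_integral_mono) (rule qpt)
  also have "\<dots> = ennreal (t/2) * A + ennreal (1/(2*t)) * ((\<integral>\<^sup>+X. 1 \<partial>P0) + (\<integral>\<^sup>+X. L X \<partial>P0))"
  proof -
    have e1: "(\<integral>\<^sup>+X. ennreal (t/2) * min 1 (L X) + ennreal (1/(2*t)) * (1 + L X) \<partial>P0)
       = (\<integral>\<^sup>+X. ennreal (t/2) * min 1 (L X) \<partial>P0) + (\<integral>\<^sup>+X. ennreal (1/(2*t)) * (1 + L X) \<partial>P0)"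
      by (rule nn_integral_add; measurable)
    have e2: "(\<integral>\<^sup>+X. ennreal (t/2) * min 1 (L X) \<partial>P0) = ennreal (t/2) * A"
      unfolding A_def by (rule nn_integral_cmult; measurable)
    have e3: "(\<integral>\<^sup>+X. ennreal (1/(2*t)) * (1 + L X) \<partial>P0) = ennreal (1/(2*t)) * (\<integral>\<^sup>+X. 1 + L X \<partial>P0)"
      by (rule nn_integral_cmult; measurable)
    have e4: "(\<integral>\<^sup>+X. 1 + L X \<partial>P0) = (\<integral>\<^sup>+X. 1 \<partial>P0) + (\<integral>\<^sup>+X. L X \<partial>P0)"
      by (rule nn_integral_add; measurable)
    show ?thesis unfolding e1 e2 e3 e4 ..
  qed
  also have "(\<integral>\<^sup>+X. 1 \<partial>P0) = 1" using prob_space.emeasure_space_1[OF P0] by simp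
  finally have main: "ennreal \<rho> \<le> ennreal (t/2) * A + ennreal (1/(2*t)) * 2"
    unfolding intL by simp
  have A1: "A \<le> 1"
  proof -
    have "A \<le> (\<integral>\<^sup>+X. 1 \<partial>P0)" unfolding A_def by (rule nn_integral_mono) simp
    thus ?thesis using prob_space.emeasure_space_1[OF P0] by simp
  qed
  then obtain \<alpha> where \<alpha>: "A = ennreal \<alpha>" "0 \<le> \<alpha>"
    by (cases A) (auto simp: top_unique)
  have eqA: "ennreal (t/2) * A + ennreal (1/(2*t)) * 2 = ennreal ((t/2) * \<alpha> + 1/t)"
  proof -
    have a1: "ennreal (t/2) * A = ennreal ((t/2) * \<alpha>)" unfolding \<alpha>(1) using t \<alpha> by (subst ennreal_mult) auto
    have a2: "ennreal (1/(2*t)) * 2 = ennreal (1/t)"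
    proof -
      have "ennreal (1/(2*t)) * 2 = ennreal (1/(2*t)) * ennreal 2" by simp
      also have "\<dots> = ennreal (1/(2*t) * 2)" using t by (subst ennreal_mult) auto
      also have "1/(2*t) * 2 = 1/t" using t by simp
      finally show ?thesis .
    qed
    show ?thesis unfolding a1 a2 using t \<alpha> by (simp add: ennreal_plus)
  qed
  have m2: "ennreal \<rho> \<le> ennreal ((t/2) * \<alpha> + 1/t)" using main unfolding eqA .
  have "\<rho> \<le> (t/2) * \<alpha> + 1/t"
    using m2 by (subst (asm) ennreal_le_iff) (use t \<alpha> in auto)
  hence "\<rho> \<le> \<alpha> / \<rho> + \<rho> / 2" using \<rho> by (simp add: t_def)
  hence "\<rho> * \<rho> / 2 \<le> \<alpha>" using \<rho> by (simp add: field_simps)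
  moreover have "\<rho> * \<rho> = exp (-1)" unfolding \<rho>_def by (simp flip: exp_add)
  ultimately have "exp (-1) / 2 \<le> \<alpha>" by simp
  hence "ennreal (exp (-1) / 2) \<le> A" using \<alpha> by simp
  thus ?thesis using RA by (rule order_trans)
qed


lemma part2:
  "\<exists>N. \<forall>n\<ge>N. ennreal (exp (-1) / 4) \<le>
     (INF est \<in> borel_measurable (Pi\<^sub>M {..<n} (\<lambda>_. \<gamma>)). SUP \<theta>\<in>\<Theta>. risk \<gamma> \<Theta> n est \<theta>)"
proof -
  obtain \<theta>0 where t0: "\<theta>0 \<in> \<Theta>" using ne_\<Theta> by blast
  obtain e where e: "e > 0" "\<And>t. \<bar>t - \<theta>0\<bar> < e \<Longrightarrow> t \<in> \<Theta>" using Theta_ball[OF t0] by blast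
  define \<delta> where "\<delta> = e / 2"
  have \<delta>: "0 < \<delta>" "\<delta> < e" using e by (auto simp: \<delta>_def)
  have inT: "t \<in> \<Theta>" if "\<theta>0 \<le> t" "t \<le> \<theta>0 + \<delta>" for t
    using e(2)[of t] that \<delta> by auto
  define \<Delta> where "\<Delta> t = (B \<theta>0 + B t) / 2 - B ((\<theta>0 + t) / 2)" for t
  have \<Delta>0: "\<Delta> \<theta>0 = 0" by (simp add: \<Delta>_def)
  have \<Delta>1: "0 < \<Delta> (\<theta>0 + \<delta>)"
  proof -
    have tn0: "\<theta>0 \<in> natparam \<gamma>" using Theta_natparam[OF t0] .
    have tn1: "\<theta>0 + \<delta> \<in> natparam \<gamma>" using Theta_natparam[OF inT[of "\<theta>0 + \<delta>"]] \<delta> by simp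
    have ne: "\<theta>0 \<noteq> \<theta>0 + \<delta>" using \<delta> by simp
    have lt: "B ((1 - 1/2) * \<theta>0 + (1/2) * (\<theta>0 + \<delta>)) < (1 - 1/2) * B \<theta>0 + (1/2) * B (\<theta>0 + \<delta>)"
      using strict unfolding strictly_convex_on_def
      apply (elim conjE) apply (drule bspec[OF _ tn0]) apply (drule bspec[OF _ tn1])
      apply (drule spec[of _ "1/2"]) using ne by simp
    have eq: "(1 - 1/2) * \<theta>0 + (1/2) * (\<theta>0 + \<delta>) = (\<theta>0 + (\<theta>0 + \<delta>)) / 2" by (simp add: field_simps)
    from lt have "B ((\<theta>0 + (\<theta>0 + \<delta>)) / 2) < (1 - 1/2) * B \<theta>0 + (1/2) * B (\<theta>0 + \<delta>)"
      unfolding eq .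
    thus ?thesis unfolding \<Delta>_def by simp
  qed
  have cont: "continuous_on {\<theta>0..\<theta>0 + \<delta>} \<Delta>"
  proof (rule continuous_at_imp_continuous_on, rule ballI)
    fix t assume t: "t \<in> {\<theta>0..\<theta>0 + \<delta>}"
    have tT: "t \<in> \<Theta>" using t inT by auto
    have mT: "(\<theta>0 + t) / 2 \<in> \<Theta>" using t \<delta> by (intro inT) auto
    have c1: "isCont B t" by (rule B_cont[OF tT])
    have c2: "isCont (\<lambda>t. B ((\<theta>0 + t) / 2)) t"
      using isCont_o2[where f="\<lambda>t. (\<theta>0 + t) / 2" and a=t and g=B] B_cont[OF mT] by (auto intro!: continuous_intros)
    show "isCont \<Delta> t" unfolding \<Delta>_def using c1 c2 by (intro continuous_intros) auto
  qed
  define N where "N = nat \<lceil>1 / (2 * \<Delta> (\<theta>0 + \<delta>))\<rceil> + 1"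
  show ?thesis
  proof (intro exI[of _ N] allI impI)
    fix n assume nN: "N \<le> n"
    have n1: "1 \<le> n" using nN by (simp add: N_def)
    have "1 / (2 * \<Delta> (\<theta>0 + \<delta>)) < real n"
    proof -
      have "1 / (2 * \<Delta> (\<theta>0 + \<delta>)) \<le> real (nat \<lceil>1 / (2 * \<Delta> (\<theta>0 + \<delta>))\<rceil>)"
        by linarith
      also have "\<dots> < real N" by (simp add: N_def)
      also have "\<dots> \<le> real n" using nN by simp
      finally show ?thesis .
    qed
    hence "1 < real n * (2 * \<Delta> (\<theta>0 + \<delta>))" using \<Delta>1 by (simp add: divide_less_eq)
    hence le1: "1 / (2 * real n) \<le> \<Delta> (\<theta>0 + \<delta>)" using n1 by (simp add: divide_le_eq algebra_simps)
    have le0: "\<Delta> \<theta>0 \<le> 1 / (2 * real n)" using \<Delta>0 by simp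
    obtain \<theta>1 where th1: "\<theta>0 \<le> \<theta>1" "\<theta>1 \<le> \<theta>0 + \<delta>" "\<Delta> \<theta>1 = 1 / (2 * real n)"
      using IVT'[of \<Delta> \<theta>0 "1 / (2 * real n)" "\<theta>0 + \<delta>", OF le0 le1 _ cont] \<delta> by auto
    have t1: "\<theta>1 \<in> \<Theta>" using th1 inT by auto
    have mT: "(\<theta>0 + \<theta>1) / 2 \<in> \<Theta>" using th1 by (intro inT) auto
    show "ennreal (exp (-1) / 4) \<le>
       (INF est \<in> borel_measurable (Pi\<^sub>M {..<n} (\<lambda>_. \<gamma>)). SUP \<theta>\<in>\<Theta>. risk \<gamma> \<Theta> n est \<theta>)"
    proof (rule INF_greatest)
      fix est :: "(nat \<Rightarrow> real) \<Rightarrow> real" assume est: "est \<in> borel_measurable (Pi\<^sub>M {..<n} (\<lambda>_. \<gamma>))"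
      define Sp where "Sp = (SUP \<theta>\<in>\<Theta>. risk \<gamma> \<Theta> n est \<theta>)"
      have "ennreal (exp (-1) / 2) \<le> risk \<gamma> \<Theta> n est \<theta>0 + risk \<gamma> \<Theta> n est \<theta>1"
        using two_point[OF t0 t1 mT n1 _ est] th1(3) by (simp add: \<Delta>_def)
      also have "\<dots> \<le> Sp + Sp" unfolding Sp_def
        by (intro add_mono SUP_upper t0 t1)
      finally have le: "ennreal (exp (-1) / 2) \<le> Sp + Sp" .
      show "ennreal (exp (-1) / 4) \<le> Sp"
      proof (cases Sp)
        case (real s)
        have ss: "ennreal s + ennreal s = ennreal (s + s)" using real by (intro ennreal_plus[symmetric]) auto
        have le': "ennreal (exp (-1) / 2) \<le> ennreal s + ennreal s" using le \<open>Sp = ennreal s\<close> by simp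
        have "ennreal (exp (-1) / 2) \<le> ennreal (s + s)" using le' unfolding ss .
        hence "exp (-1) / 2 \<le> s + s" using real by (subst (asm) ennreal_le_iff) auto
        hence "exp (-1) / 4 \<le> s" by simp
        thus ?thesis using real by simp
      qed simp
    qed
  qed
qed

end

theorem proposition4:
  fixes \<gamma> :: "real measure" and \<Theta> :: "real set"
  assumes sets_\<gamma>: "sets \<gamma> = sets borel"
    and open_\<Theta>: "open \<Theta>" and ne_\<Theta>: "\<Theta> \<noteq> {}"
    and sub_\<Theta>: "\<Theta> \<subseteq> natparam \<gamma>"
    and strict: "strictly_convex_on (natparam \<gamma>) (logpart \<gamma>)"
  shows "(\<forall>\<theta>\<in>\<Theta>. \<forall>n::nat. n \<ge> 1 \<longrightarrow>
            risk \<gamma> \<Theta> n (\<lambda>X. (\<Sum>i<n. X i) / real n) \<theta> \<le> 2)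
       \<and> (\<forall>M \<epsilon>0. local_triangle (meanp \<gamma> ` \<Theta>) (sqrt_breg \<gamma> \<Theta>) M \<epsilon>0 \<longrightarrow>
            (\<exists>N. \<forall>n\<ge>N.
               (INF est \<in> borel_measurable (\<Pi>\<^sub>M i\<in>{..<n}. \<gamma>). SUP \<theta>\<in>\<Theta>. risk \<gamma> \<Theta> n est \<theta>)
                 \<ge> ennreal (M * ln 2 / 16)))"
proof -
  interpret EF \<gamma> \<Theta> using assms by unfold_locales auto
  show ?thesis
  proof (intro conjI ballI allI impI)
    fix \<theta> n assume "\<theta> \<in> \<Theta>" "(1::nat) \<le> n"
    thus "risk \<gamma> \<Theta> n (\<lambda>X. (\<Sum>i<n. X i) / real n) \<theta> \<le> 2" by (rule part1)
  next
    fix M \<epsilon>0 assume lt: "local_triangle (meanp \<gamma> ` \<Theta>) (sqrt_breg \<gamma> \<Theta>) M \<epsilon>0"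
    hence M: "0 < M" "M \<le> 1" by (auto simp: local_triangle_def)
    have ln2: "ln (2::real) \<le> 1" using ln_le_minus_one[of 2] by simp
    have e3: "exp (1::real) \<le> 3" by (rule exp_le)
    have "1 / 3 \<le> exp (-1::real)"
    proof -
      have "1 / 3 \<le> 1 / exp (1::real)" using e3 by (intro divide_left_mono) auto
      thus ?thesis by (simp add: exp_minus inverse_eq_divide)
    qed
    moreover have "M * ln 2 \<le> 1 * 1" using M ln2 by (intro mult_mono) auto
    ultimately have bnd: "M * ln 2 / 16 \<le> exp (-1) / 4" by simp
    obtain N where N: "\<And>n. N \<le> n \<Longrightarrow> ennreal (exp (-1) / 4) \<le>
        (INF est \<in> borel_measurable (Pi\<^sub>M {..<n} (\<lambda>_. \<gamma>)). SUP \<theta>\<in>\<Theta>. risk \<gamma> \<Theta> n est \<theta>)"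
      using part2 by blast
    show "\<exists>N. \<forall>n\<ge>N. (INF est \<in> borel_measurable (\<Pi>\<^sub>M i\<in>{..<n}. \<gamma>). SUP \<theta>\<in>\<Theta>. risk \<gamma> \<Theta> n est \<theta>)
                 \<ge> ennreal (M * ln 2 / 16)"
    proof (intro exI[of _ N] allI impI)
      fix n assume "N \<le> n"
      have "ennreal (M * ln 2 / 16) \<le> ennreal (exp (-1) / 4)" using bnd by (rule ennreal_leI)
      also have "\<dots> \<le> (INF est \<in> borel_measurable (Pi\<^sub>M {..<n} (\<lambda>_. \<gamma>)). SUP \<theta>\<in>\<Theta>. risk \<gamma> \<Theta> n est \<theta>)"
        by (rule N[OF \<open>N \<le> n\<close>])
      finally show "(INF est \<in> borel_measurable (\<Pi>\<^sub>M i\<in>{..<n}. \<gamma>). SUP \<theta>\<in>\<Theta>. risk \<gamma> \<Theta> n est \<theta>)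
                 \<ge> ennreal (M * ln 2 / 16)" by simp
    qed
  qed
qed

end
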